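(* The function $W$ defined below belongs to the class $\mathcal R(\mathcal J)$.
   Context: $\mathcal I=(\alpha,\infty)$, $-\infty\le\alpha<0$; $\mu,\sigma:\mathcal I\to\mathbb R$ Lipschitz, $\sigma>0$, $\alpha,+\infty$ natural boundaries of $dX_t=\mu(X_t)dt+\sigma(X_t)dB_t$; $r>0$; $\mathcal J=\{(x,m)\in[0,\infty)^2:x\ge m\}$. $f$ is a probability density on $\mathcal I$ with distribution function $F$, with $\bar y>0$ such that $f$ is Lipschitz and positive on $[0,\bar y]$ and vanishes outside. $U:[0,\infty)\to[0,\infty)$. Assumptions: (a) $\mu,\sigma$ $C^1$ with Lipschitz derivatives, $\mu(0)>rU(0)$, $\sup_{x\ge0}\mu'(x)<r$; (b) $U$ nondecreasing, concave, $C^2$ on $[0,\infty)$, for some $u^*\ge0$: $U'\ge1$ on $[0,u^*]$, $U'=1$ on $[u^*,\infty)$, $\mu U'+\frac12\sigma^2U''-rU>0$ on $[0,u^* )$; (c) $\mu$ twice differentiable, $\mu''\le0$ on $[0,\infty)$, $f/F$ decreasing on $[0,\bar y]$. Notation. $\overline x>0$: unique point with $\mu-rU>0$ on $[0,\overline x)$, $<0$ on $(\overline x,\infty)$. $\psi,\phi$: positive increasing/decreasing solutions of $\frac12\sigma^2u''+\mu u'-ru=0$. $D(x,m)=\psi'(x)\phi(m)-\phi'(x)\psi(m)$, $N(x,m)=\phi(x)\psi(m)-\psi(x)\phi(m)+D(x,m)\frac{\mu(x)}{r}-D(x,x)U(m)$, $E(x,m)=\frac{f(m)/F(m)}{1-\mu'(x)/r}\frac{N(x,m)}{D(x,m)}$;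 $\eta(m)$ unique solution $x$ of $N(x,m)=0$ ($m\in[0,\overline x]$), $x^0=\eta(0)$. $b:[0,\overline x]\to[0,\overline x]$ is the unique map with $b\in C([0,\overline x])\cap C^1((0,\overline x\wedge\bar y))$, $b(0)=x^0$, $b'(m)=E(b(m),m)$ on $(0,\overline x\wedge\bar y)$, $b\equiv b(\overline x\wedge\bar y)$ on $(\overline x\wedge\bar y,\overline x]$; $\overline m=\min\{m:b(m)=m\}\in(0,\overline x)$. Function $W$: with $A(m)=\frac{F(m)\phi''(b(m))}{\psi'(b(m))\phi''(b(m))-\phi'(b(m))\psi''(b(m))}$, $B(m)=-\frac{F(m)\psi''(b(m))}{\psi'(b(m))\phi''(b(m))-\phi'(b(m))\psi''(b(m))}$: $W(x,m)=A(m)\psi(x)+B(m)\phi(x)$ for $0\le m\le\overline m$, $m\le x\le b(m)$; $W(x,m)=(x-b(m))F(m)+\frac{\mu(b(m))}{r}F(m)$ for $0\le m\le\overline m$, $x>b(m)$; $W(x,m)=\frac{\mu(\overline m)}{r}F(\overline m)+(x-m)F(m)+\int_{\overline m}^m(U(s)f(s)+F(s))ds$ for $m>\overline m$, $x\ge m$. Class $\mathcal R(\mathcal J)$: continuous functions $w$ on $\mathcal J$ for which there is a finite sequence $0<m_1<\dots<m_k$ ($k\ge1$) with $w\in C^{2,1}(A_i)$ for $i=1,\dots,k+1$, where $A_1=\{(x,m)\in\mathcal J:0<m\le m_1\}$, $A_i=\{(x,m)\in\mathcal J:m_{i-1}\le m\le m_i\}$ ($2\le i\le k$), $A_{k+1}=\{(x,m)\in\mathcal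 J:m\ge m_k\}$; $w\in C^{2,1}(A)$ means there is a function on a neighbourhood of $A$ in $(0,\infty)^2$, twice continuously differentiable in $x$ and continuously differentiable in $m$, coinciding with $w$ on $A$. *)

theory Defs
  imports "HOL-Analysis.Analysis"
begin

definition state_space :: "ereal \<Rightarrow> real set" where
  "state_space \<alpha> = {x. \<alpha> < ereal x}"

text \<open>Scale density (normalised at the reference point 0) and speed density of
  \<open>dX = \<mu>(X) dt + \<sigma>(X) dB\<close>.\<close>
definition scale_dens :: "(real \<Rightarrow> real) \<Rightarrow> (real \<Rightarrow> real) \<Rightarrow> real \<Rightarrow> real" where
  "scale_dens \<mu> \<sigma> x = exp (- (LBINT y=0..x. 2 * \<mu> y / (\<sigma> y)\<^sup>2))"

definition speed_dens :: "(real \<Rightarrow> real) \<Rightarrow> (real \<Rightarrow> real) \<Rightarrow> real \<Rightarrow> real" where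
  "speed_dens \<mu> \<sigma> x = 2 / ((\<sigma> x)\<^sup>2 * scale_dens \<mu> \<sigma> x)"

text \<open>Feller's classification (Karlin--Taylor): a boundary is natural iff both
  \<open>\<Sigma>\<close> and \<open>N\<close> are infinite.  Left boundary \<open>\<alpha>\<close>:
  \<open>\<Sigma>(\<alpha>) = \<integral>_\<alpha>^0 (S(0)-S(\<xi>)) dM(\<xi>)\<close>, \<open>N(\<alpha>) = \<integral>_\<alpha>^0 (M(0)-M(\<xi>)) dS(\<xi>)\<close>.\<close>
definition natural_left :: "ereal \<Rightarrow> (real \<Rightarrow> real) \<Rightarrow> (real \<Rightarrow> real) \<Rightarrow> bool" where
  "natural_left \<alpha> \<mu> \<sigma> \<longleftrightarrow>
     (\<integral>\<^sup>+ \<xi>\<in>{x. \<alpha> < ereal x \<and> x < 0}.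
        (\<integral>\<^sup>+ \<eta>\<in>{\<xi>..0}. ennreal (scale_dens \<mu> \<sigma> \<eta>) \<partial>lborel) * ennreal (speed_dens \<mu> \<sigma> \<xi>) \<partial>lborel) = \<infinity>
   \<and> (\<integral>\<^sup>+ \<xi>\<in>{x. \<alpha> < ereal x \<and> x < 0}.
        (\<integral>\<^sup>+ \<eta>\<in>{\<xi>..0}. ennreal (speed_dens \<mu> \<sigma> \<eta>) \<partial>lborel) * ennreal (scale_dens \<mu> \<sigma> \<xi>) \<partial>lborel) = \<infinity>"

text \<open>Right boundary \<open>+\<infinity>\<close>:
  \<open>\<Sigma>(\<infinity>) = \<integral>_0^\<infinity> (S(\<xi>)-S(0)) dM(\<xi>)\<close>, \<open>N(\<infinity>) = \<integral>_0^\<infinity> (M(\<xi>)-M(0)) dS(\<xi>)\<close>.\<close>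
definition natural_right :: "(real \<Rightarrow> real) \<Rightarrow> (real \<Rightarrow> real) \<Rightarrow> bool" where
  "natural_right \<mu> \<sigma> \<longleftrightarrow>
     (\<integral>\<^sup>+ \<xi>\<in>{0<..}.
        (\<integral>\<^sup>+ \<eta>\<in>{0..\<xi>}. ennreal (scale_dens \<mu> \<sigma> \<eta>) \<partial>lborel) * ennreal (speed_dens \<mu> \<sigma> \<xi>) \<partial>lborel) = \<infinity>
   \<and> (\<integral>\<^sup>+ \<xi>\<in>{0<..}.
        (\<integral>\<^sup>+ \<eta>\<in>{0..\<xi>}. ennreal (speed_dens \<mu> \<sigma> \<eta>) \<partial>lborel) * ennreal (scale_dens \<mu> \<sigma> \<xi>) \<partial>lborel) = \<infinity>"

definition Dfun :: "(real \<Rightarrow> real) \<Rightarrow> (real \<Rightarrow> real) \<Rightarrow> real \<Rightarrow> real \<Rightarrow> real" where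
  "Dfun \<psi> \<phi> x m = deriv \<psi> x * \<phi> m - deriv \<phi> x * \<psi> m"

definition Nfun :: "(real \<Rightarrow> real) \<Rightarrow> (real \<Rightarrow> real) \<Rightarrow> (real \<Rightarrow> real) \<Rightarrow> real
    \<Rightarrow> (real \<Rightarrow> real) \<Rightarrow> real \<Rightarrow> real \<Rightarrow> real" where
  "Nfun \<psi> \<phi> \<mu> r U x m =
     \<phi> x * \<psi> m - \<psi> x * \<phi> m + Dfun \<psi> \<phi> x m * (\<mu> x / r) - Dfun \<psi> \<phi> x x * U m"

definition Efun :: "(real \<Rightarrow> real) \<Rightarrow> (real \<Rightarrow> real) \<Rightarrow> (real \<Rightarrow> real) \<Rightarrow> real
    \<Rightarrow> (real \<Rightarrow> real) \<Rightarrow> (real \<Rightarrow> real) \<Rightarrow> (real \<Rightarrow> real) \<Rightarrow> real \<Rightarrow> real \<Rightarrow> real" where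
  "Efun \<psi> \<phi> \<mu> r U f F x m =
     (f m / F m) / (1 - deriv \<mu> x / r) * (Nfun \<psi> \<phi> \<mu> r U x m / Dfun \<psi> \<phi> x m)"

definition Acoef :: "(real \<Rightarrow> real) \<Rightarrow> (real \<Rightarrow> real) \<Rightarrow> (real \<Rightarrow> real) \<Rightarrow> (real \<Rightarrow> real) \<Rightarrow> real \<Rightarrow> real" where
  "Acoef \<psi> \<phi> F b m =
     F m * deriv (deriv \<phi>) (b m) /
     (deriv \<psi> (b m) * deriv (deriv \<phi>) (b m) - deriv \<phi> (b m) * deriv (deriv \<psi>) (b m))"

definition Bcoef :: "(real \<Rightarrow> real) \<Rightarrow> (real \<Rightarrow> real) \<Rightarrow> (real \<Rightarrow> real) \<Rightarrow> (real \<Rightarrow> real) \<Rightarrow> real \<Rightarrow> real" where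
  "Bcoef \<psi> \<phi> F b m =
     - (F m * deriv (deriv \<psi>) (b m) /
     (deriv \<psi> (b m) * deriv (deriv \<phi>) (b m) - deriv \<phi> (b m) * deriv (deriv \<psi>) (b m)))"

text \<open>The candidate value function \<open>W\<close> (only its values on \<open>\<J>\<close> matter).\<close>
definition Wfun :: "(real \<Rightarrow> real) \<Rightarrow> (real \<Rightarrow> real) \<Rightarrow> (real \<Rightarrow> real) \<Rightarrow> real
    \<Rightarrow> (real \<Rightarrow> real) \<Rightarrow> (real \<Rightarrow> real) \<Rightarrow> (real \<Rightarrow> real) \<Rightarrow> (real \<Rightarrow> real) \<Rightarrow> real
    \<Rightarrow> real \<Rightarrow> real \<Rightarrow> real" where
  "Wfun \<psi> \<phi> \<mu> r U f F b mbar x m =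
     (if m \<le> mbar then
        (if x \<le> b m then Acoef \<psi> \<phi> F b m * \<psi> x + Bcoef \<psi> \<phi> F b m * \<phi> x
         else (x - b m) * F m + \<mu> (b m) / r * F m)
      else \<mu> mbar / r * F mbar + (x - m) * F m + (LBINT s=mbar..m. U s * f s + F s))"

definition Jset :: "(real \<times> real) set" where
  "Jset = {(x, m). 0 \<le> m \<and> m \<le> x}"

definition C21_open :: "(real \<times> real) set \<Rightarrow> (real \<Rightarrow> real \<Rightarrow> real) \<Rightarrow> bool" where
  "C21_open V g \<longleftrightarrow> (\<exists>gx gxx gm.
      continuous_on V (\<lambda>(x, m). g x m) \<and>
      continuous_on V (\<lambda>(x, m). gx x m) \<and>
      continuous_on V (\<lambda>(x, m). gxx x m) \<and>
      continuous_on V (\<lambda>(x, m). gm x m) \<and>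
      (\<forall>(x, m) \<in> V.
         ((\<lambda>y. g y m) has_real_derivative gx x m) (at x) \<and>
         ((\<lambda>y. gx y m) has_real_derivative gxx x m) (at x) \<and>
         ((\<lambda>n. g x n) has_real_derivative gm x m) (at m)))"

definition C21_on :: "(real \<times> real) set \<Rightarrow> (real \<Rightarrow> real \<Rightarrow> real) \<Rightarrow> bool" where
  "C21_on A w \<longleftrightarrow> (\<exists>V g. open V \<and> A \<subseteq> V \<and> V \<subseteq> {0<..} \<times> {0<..} \<and> C21_open V g \<and>
                        (\<forall>(x, m) \<in> A. g x m = w x m))"

text \<open>The pieces \<open>A_1, \<dots>, A_{k+1}\<close> determined by \<open>0 < m_1 < \<dots> < m_k\<close>
  (the list \<open>ms = [m_1, \<dots>, m_k]\<close>, indices shifted to start at 0).\<close>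
definition piece :: "real list \<Rightarrow> nat \<Rightarrow> (real \<times> real) set" where
  "piece ms i =
     (if i = 0 then {(x, m) \<in> Jset. 0 < m \<and> m \<le> ms ! 0}
      else if i < length ms then {(x, m) \<in> Jset. ms ! (i - 1) \<le> m \<and> m \<le> ms ! i}
      else {(x, m) \<in> Jset. ms ! (length ms - 1) \<le> m})"

definition class_R :: "(real \<Rightarrow> real \<Rightarrow> real) \<Rightarrow> bool" where
  "class_R w \<longleftrightarrow> continuous_on Jset (\<lambda>(x, m). w x m) \<and>
     (\<exists>ms. ms \<noteq> [] \<and> sorted_wrt (<) ms \<and> 0 < ms ! 0 \<and>
        (\<forall>i \<le> length ms. C21_on (piece ms i) w))"

end

theory Submission
  imports Defs
begin


locale LS =
  fixes \<alpha> :: ereal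
    and \<mu> \<sigma> \<psi> \<phi> f F U b :: "real \<Rightarrow> real"
    and r ybar xbar mbar :: real
  assumes alpha: "\<alpha> < 0"
    and sigma_pos: "\<forall>x\<in>state_space \<alpha>. \<sigma> x > 0"
    and r_pos: "r > 0"
    and ybar_pos: "ybar > 0"
    and f_nonneg: "\<forall>x\<in>state_space \<alpha>. f x \<ge> 0"
    and f_int: "set_integrable lborel (state_space \<alpha>) f"
    and f_total: "(LINT y:state_space \<alpha>|lborel. f y) = 1"
    and F_def: "\<forall>x\<in>state_space \<alpha>. F x = (LINT y:{y\<in>state_space \<alpha>. y \<le> x}|lborel. f y)"
    and f_lip: "\<exists>C. C-lipschitz_on {0..ybar} f"
    and f_pos: "\<forall>x\<in>{0..ybar}. f x > 0"
    and f_zero: "\<forall>x\<in>state_space \<alpha>. x \<notin> {0..ybar} \<longrightarrow> f x = 0"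
    and U_nonneg: "\<forall>x\<ge>0. U x \<ge> 0"
    and U_cont: "continuous_on {0..} U"
    and mu_C1: "\<forall>x\<in>state_space \<alpha>. \<mu> differentiable (at x)"
    and mu'_lip: "\<exists>C. C-lipschitz_on (state_space \<alpha>) (deriv \<mu>)"
    and sigma_C1: "\<forall>x\<in>state_space \<alpha>. \<sigma> differentiable (at x)"
    and mu'_bound: "\<exists>c<r. \<forall>x\<ge>0. deriv \<mu> x \<le> c"
    and xbar_pos: "xbar > 0"
    and psi_C2: "\<forall>x\<in>state_space \<alpha>. \<psi> differentiable (at x) \<and> deriv \<psi> differentiable (at x)"
    and phi_C2: "\<forall>x\<in>state_space \<alpha>. \<phi> differentiable (at x) \<and> deriv \<phi> differentiable (at x)"
    and psi_ode: "\<forall>x\<in>state_space \<alpha>.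
        1/2 * (\<sigma> x)\<^sup>2 * deriv (deriv \<psi>) x + \<mu> x * deriv \<psi> x - r * \<psi> x = 0"
    and phi_ode: "\<forall>x\<in>state_space \<alpha>.
        1/2 * (\<sigma> x)\<^sup>2 * deriv (deriv \<phi>) x + \<mu> x * deriv \<phi> x - r * \<phi> x = 0"
    and psi_pos: "\<forall>x\<in>state_space \<alpha>. \<psi> x > 0"
    and phi_pos: "\<forall>x\<in>state_space \<alpha>. \<phi> x > 0"
    and psi_incr: "strict_mono_on (state_space \<alpha>) \<psi>"
    and phi_decr: "strict_antimono_on (state_space \<alpha>) \<phi>"
    and b_range: "b ` {0..xbar} \<subseteq> {0..xbar}"
    and b_cont: "continuous_on {0..xbar} b"
    and b_ode: "\<forall>m\<in>{0<..<min xbar ybar}.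
        (b has_real_derivative Efun \<psi> \<phi> \<mu> r U f F (b m) m) (at m)"
    and b_C1: "continuous_on {0<..<min xbar ybar} (\<lambda>m. Efun \<psi> \<phi> \<mu> r U f F (b m) m)"
    and b_const: "\<forall>m\<in>{min xbar ybar<..xbar}. b m = b (min xbar ybar)"
    and mbar_mem: "mbar \<in> {0<..<xbar}"
    and mbar_fix: "b mbar = mbar"
begin

abbreviation "S \<equiv> state_space \<alpha>"

lemma S_open: "open S"
proof (cases \<alpha>)
  case (real a)
  then have "S = {a<..}" by (auto simp: state_space_def)
  then show ?thesis by simp
next
  case PInf then show ?thesis using alpha by simp
next
  case MInf
  then have "S = UNIV" by (auto simp: state_space_def)
  then show ?thesis by simp
qed

lemma S_ge0: "x \<ge> 0 \<Longrightarrow> x \<in> S"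
  using alpha unfolding state_space_def
  by (metis dual_order.strict_trans1 mem_Collect_eq zero_ereal_def ereal_less_eq(3))

lemma S_up: "x \<in> S \<Longrightarrow> x \<le> y \<Longrightarrow> y \<in> S"
  unfolding state_space_def by (auto intro: order.strict_trans2)

lemma S_sub: "{0..} \<subseteq> S" "{0<..} \<subseteq> S" using S_ge0 by auto

lemma psi_d: "x \<in> S \<Longrightarrow> (\<psi> has_real_derivative deriv \<psi> x) (at x)"
  using psi_C2 DERIV_deriv_iff_real_differentiable by blast
lemma psi_dd: "x \<in> S \<Longrightarrow> (deriv \<psi> has_real_derivative deriv (deriv \<psi>) x) (at x)"
  using psi_C2 DERIV_deriv_iff_real_differentiable by blast
lemma phi_d: "x \<in> S \<Longrightarrow> (\<phi> has_real_derivative deriv \<phi> x) (at x)"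
  using phi_C2 DERIV_deriv_iff_real_differentiable by blast
lemma phi_dd: "x \<in> S \<Longrightarrow> (deriv \<phi> has_real_derivative deriv (deriv \<phi>) x) (at x)"
  using phi_C2 DERIV_deriv_iff_real_differentiable by blast
lemma mu_d: "x \<in> S \<Longrightarrow> (\<mu> has_real_derivative deriv \<mu> x) (at x)"
  using mu_C1 DERIV_deriv_iff_real_differentiable by blast

lemma cont_of_deriv: "(\<And>x. x \<in> S \<Longrightarrow> (g has_real_derivative g' x) (at x)) \<Longrightarrow> continuous_on S g"
  by (meson DERIV_isCont continuous_at_imp_continuous_on)

lemma psi_c: "continuous_on S \<psi>" by (rule cont_of_deriv, erule psi_d)
lemma psi'_c: "continuous_on S (deriv \<psi>)" by (rule cont_of_deriv, erule psi_dd)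
lemma phi_c: "continuous_on S \<phi>" by (rule cont_of_deriv, erule phi_d)
lemma phi'_c: "continuous_on S (deriv \<phi>)" by (rule cont_of_deriv, erule phi_dd)
lemma mu_c: "continuous_on S \<mu>" by (rule cont_of_deriv, erule mu_d)
lemma sigma_c: "continuous_on S \<sigma>"
  using sigma_C1 by (meson differentiable_imp_continuous_within continuous_at_imp_continuous_on)
lemma mu'_c: "continuous_on S (deriv \<mu>)"
  using mu'_lip lipschitz_on_continuous_on by blast

lemma psi''_eq: "x \<in> S \<Longrightarrow> deriv (deriv \<psi>) x = 2 * (r * \<psi> x - \<mu> x * deriv \<psi> x) / (\<sigma> x)\<^sup>2"
  using psi_ode sigma_pos by (auto simp: field_simps)
lemma phi''_eq: "x \<in> S \<Longrightarrow> deriv (deriv \<phi>) x = 2 * (r * \<phi> x - \<mu> x * deriv \<phi> x) / (\<sigma> x)\<^sup>2"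
  using phi_ode sigma_pos by (auto simp: field_simps)

lemma psi''_c: "continuous_on S (deriv (deriv \<psi>))"
proof -
  have "continuous_on S (\<lambda>x. 2 * (r * \<psi> x - \<mu> x * deriv \<psi> x) / (\<sigma> x)\<^sup>2)"
    using sigma_pos by (intro continuous_intros psi_c mu_c psi'_c sigma_c) auto
  then show ?thesis by (rule continuous_on_cong[THEN iffD1, rotated 2]) (auto simp: psi''_eq)
qed
lemma phi''_c: "continuous_on S (deriv (deriv \<phi>))"
proof -
  have "continuous_on S (\<lambda>x. 2 * (r * \<phi> x - \<mu> x * deriv \<phi> x) / (\<sigma> x)\<^sup>2)"
    using sigma_pos by (intro continuous_intros phi_c mu_c phi'_c sigma_c) auto
  then show ?thesis by (rule continuous_on_cong[THEN iffD1, rotated 2]) (auto simp: phi''_eq)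
qed

lemma psi'_nonneg: "x \<in> S \<Longrightarrow> deriv \<psi> x \<ge> 0"
proof (rule ccontr)
  assume x: "x \<in> S" and "\<not> deriv \<psi> x \<ge> 0"
  then obtain d where d: "d > 0" "\<forall>h>0. h < d \<longrightarrow> \<psi> x > \<psi> (x + h)"
    using DERIV_neg_dec_right[OF psi_d[OF x]] by force
  have "\<psi> x < \<psi> (x + d/2)"
    using psi_incr x S_up[of x "x + d/2"] d(1) by (intro strict_mono_onD[OF psi_incr]) auto
  with d(2)[rule_format, of "d/2"] d(1) show False by linarith
qed

lemma phi'_nonpos: "x \<in> S \<Longrightarrow> deriv \<phi> x \<le> 0"
proof (rule ccontr)
  assume x: "x \<in> S" and "\<not> deriv \<phi> x \<le> 0"
  then obtain d where d: "d > 0" "\<forall>h>0. h < d \<longrightarrow> \<phi> x < \<phi> (x + h)"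
    using DERIV_pos_inc_right[OF phi_d[OF x]] by force
  have "\<phi> x > \<phi> (x + d/2)"
    using phi_decr x S_up[of x "x + d/2"] d(1) monotone_onD[OF phi_decr] by auto
  with d(2)[rule_format, of "d/2"] d(1) show False by linarith
qed

lemma phi'_neg: "x \<in> S \<Longrightarrow> deriv \<phi> x < 0"
proof (rule ccontr)
  assume x: "x \<in> S" and "\<not> deriv \<phi> x < 0"
  then have z: "deriv \<phi> x = 0" using phi'_nonpos[OF x] by auto
  have "deriv (deriv \<phi>) x > 0" using phi''_eq[OF x] z phi_pos x r_pos sigma_pos by auto
  then obtain d where d: "d > 0" "\<forall>h>0. h < d \<longrightarrow> deriv \<phi> x < deriv \<phi> (x + h)"
    using DERIV_pos_inc_right[OF phi_dd[OF x]] by force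
  have "deriv \<phi> (x + d/2) \<le> 0" using phi'_nonpos S_up[OF x, of "x+d/2"] d(1) by auto
  with d(2)[rule_format, of "d/2"] d(1) z show False by linarith
qed

definition "wr y = deriv \<psi> y * \<phi> y - deriv \<phi> y * \<psi> y"

lemma wr_pos: "y \<in> S \<Longrightarrow> wr y > 0"
proof -
  assume y: "y \<in> S"
  have "deriv \<psi> y * \<phi> y \<ge> 0" using psi'_nonneg[OF y] phi_pos y by auto
  moreover have "deriv \<phi> y * \<psi> y < 0" using phi'_neg[OF y] psi_pos y by (simp add: mult_neg_pos)
  ultimately show ?thesis unfolding wr_def by linarith
qed

lemma D_pos: "x \<in> S \<Longrightarrow> m \<in> S \<Longrightarrow> Dfun \<psi> \<phi> x m > 0"
proof -
  assume x: "x \<in> S" and m: "m \<in> S"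
  have "deriv \<psi> x * \<phi> m \<ge> 0" using psi'_nonneg[OF x] phi_pos m by auto
  moreover have "deriv \<phi> x * \<psi> m < 0" using phi'_neg[OF x] psi_pos m by (simp add: mult_neg_pos)
  ultimately show ?thesis unfolding Dfun_def by linarith
qed

end



lemma glue_deriv:
  fixes g p q :: "real \<Rightarrow> real"
  assumes "(p has_real_derivative D) (at a)" "(q has_real_derivative D) (at a)"
    and "\<And>t. t \<le> a \<Longrightarrow> g t = p t" "\<And>t. t \<ge> a \<Longrightarrow> g t = q t"
  shows "(g has_real_derivative D) (at a)"
proof -
  have 1: "(g has_real_derivative D) (at a within {..a})"
    by (rule has_field_derivative_transform_within[of p D a "{..a}" 1])
       (use assms in \<open>auto intro: has_field_derivative_at_within\<close>)
  have 2: "(g has_real_derivative D) (at a within {a..})"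
    by (rule has_field_derivative_transform_within[of q D a "{a..}" 1])
       (use assms in \<open>auto intro: has_field_derivative_at_within\<close>)
  have "(g has_real_derivative D) (at a within ({..a} \<union> {a..}))"
    using 1 2 unfolding has_field_derivative_iff Lim_within_Un by blast
  moreover have "{..a} \<union> {a..} = (UNIV::real set)" by auto
  ultimately show ?thesis by simp
qed

lemma cont_fst: "continuous_on A g \<Longrightarrow> continuous_on (A \<times> B) (\<lambda>z. g (fst z))"
  by (rule continuous_on_compose2[OF _ continuous_on_fst]) auto
lemma cont_snd: "continuous_on B g \<Longrightarrow> continuous_on (A \<times> B) (\<lambda>z. g (snd z))"
  by (rule continuous_on_compose2[OF _ continuous_on_snd]) auto

context LS begin

definition "c1 y = (r * \<phi> y - \<mu> y * deriv \<phi> y) / (r * wr y)"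
definition "c2 y = - (r * \<psi> y - \<mu> y * deriv \<psi> y) / (r * wr y)"
definition "wrd y = deriv (deriv \<psi>) y * \<phi> y + deriv \<psi> y * deriv \<phi> y
    - (deriv (deriv \<phi>) y * \<psi> y + deriv \<phi> y * deriv \<psi> y)"
definition "c1d y = ((r * deriv \<phi> y - (deriv \<mu> y * deriv \<phi> y + \<mu> y * deriv (deriv \<phi>) y)) * (r * wr y)
    - (r * \<phi> y - \<mu> y * deriv \<phi> y) * (r * wrd y)) / ((r * wr y) * (r * wr y))"
definition "c2d y = - (((r * deriv \<psi> y - (deriv \<mu> y * deriv \<psi> y + \<mu> y * deriv (deriv \<psi>) y)) * (r * wr y)
    - (r * \<psi> y - \<mu> y * deriv \<psi> y) * (r * wrd y)) / ((r * wr y) * (r * wr y)))"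

lemma wr_d: assumes y: "y \<in> S" shows "(wr has_real_derivative wrd y) (at y)"
  unfolding wr_def[abs_def] wrd_def
  apply (rule DERIV_cong)
   apply (rule DERIV_divide DERIV_diff DERIV_add DERIV_mult DERIV_minus psi_d[OF y] phi_d[OF y] psi_dd[OF y] phi_dd[OF y] mu_d[OF y] DERIV_const)+
  apply (simp add: algebra_simps)
  done

lemma wr_nz: "y \<in> S \<Longrightarrow> wr y \<noteq> 0" using wr_pos[of y] by simp

lemma wr_c: "continuous_on S wr" by (rule cont_of_deriv, erule wr_d)

lemma wrd_c: "continuous_on S wrd"
  unfolding wrd_def by (intro continuous_intros psi_c psi'_c psi''_c phi_c phi'_c phi''_c)

lemma c1_d: "y \<in> S \<Longrightarrow> (c1 has_real_derivative c1d y) (at y)"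
proof -
  assume y: "y \<in> S"
  have "wr y \<noteq> 0" using wr_pos[OF y] by simp
  then show ?thesis
    unfolding c1_def[abs_def] c1d_def using r_pos
    apply -
    apply (rule DERIV_cong)
     apply (rule DERIV_divide DERIV_diff DERIV_add DERIV_mult DERIV_minus psi_d[OF y] phi_d[OF y] psi_dd[OF y] phi_dd[OF y] mu_d[OF y] DERIV_const wr_d[OF y])+
    apply (auto simp: field_simps)
    done
qed

lemma c2_d: "y \<in> S \<Longrightarrow> (c2 has_real_derivative c2d y) (at y)"
proof -
  assume y: "y \<in> S"
  have "wr y \<noteq> 0" using wr_pos[OF y] by simp
  then show ?thesis
    unfolding c2_def[abs_def] c2d_def using r_pos
    apply -
    apply (rule DERIV_cong)
     apply (rule DERIV_divide DERIV_diff DERIV_add DERIV_mult DERIV_minus psi_d[OF y] phi_d[OF y] psi_dd[OF y] phi_dd[OF y] mu_d[OF y] DERIV_const wr_d[OF y])+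
    apply (auto simp: field_simps)
    done
qed

lemma c1_c: "continuous_on S c1" by (rule cont_of_deriv, erule c1_d)
lemma c2_c: "continuous_on S c2" by (rule cont_of_deriv, erule c2_d)

lemma c1d_c: "continuous_on S c1d"
  unfolding c1d_def using wr_nz r_pos
  by (intro continuous_intros psi_c psi'_c psi''_c phi_c phi'_c phi''_c mu_c mu'_c wr_c wrd_c) auto
lemma c2d_c: "continuous_on S c2d"
  unfolding c2d_def using wr_nz r_pos
  by (intro continuous_intros psi_c psi'_c psi''_c phi_c phi'_c phi''_c mu_c mu'_c wr_c wrd_c) auto

lemma I1: assumes y: "y \<in> S" shows "c1 y * \<psi> y + c2 y * \<phi> y = \<mu> y / r"
proof -
  have w: "wr y \<noteq> 0" using wr_pos[OF y] by simp
  have e: "(r * \<phi> y - \<mu> y * deriv \<phi> y) * \<psi> y - (r * \<psi> y - \<mu> y * deriv \<psi> y) * \<phi> y = \<mu> y * wr y"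
    by (simp add: wr_def algebra_simps)
  have "c1 y * \<psi> y + c2 y * \<phi> y = ((r * \<phi> y - \<mu> y * deriv \<phi> y) * \<psi> y - (r * \<psi> y - \<mu> y * deriv \<psi> y) * \<phi> y) / (r * wr y)"
    unfolding c1_def c2_def using w r_pos by (simp add: field_simps)
  also have "\<dots> = \<mu> y / r" using e w r_pos by simp
  finally show ?thesis .
qed

lemma I2: assumes y: "y \<in> S" shows "c1 y * deriv \<psi> y + c2 y * deriv \<phi> y = 1"
proof -
  have w: "wr y \<noteq> 0" using wr_pos[OF y] by simp
  have e: "(r * \<phi> y - \<mu> y * deriv \<phi> y) * deriv \<psi> y - (r * \<psi> y - \<mu> y * deriv \<psi> y) * deriv \<phi> y = r * wr y"
    by (simp add: wr_def algebra_simps)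
  have "c1 y * deriv \<psi> y + c2 y * deriv \<phi> y = ((r * \<phi> y - \<mu> y * deriv \<phi> y) * deriv \<psi> y - (r * \<psi> y - \<mu> y * deriv \<psi> y) * deriv \<phi> y) / (r * wr y)"
    unfolding c1_def c2_def using w r_pos by (simp add: field_simps)
  also have "\<dots> = 1" using e w r_pos by simp
  finally show ?thesis .
qed

lemma I3: assumes y: "y \<in> S" shows "c1 y * deriv (deriv \<psi>) y + c2 y * deriv (deriv \<phi>) y = 0"
proof -
  have w: "wr y \<noteq> 0" using wr_pos[OF y] by simp
  have e: "(r * \<phi> y - \<mu> y * deriv \<phi> y) * deriv (deriv \<psi>) y - (r * \<psi> y - \<mu> y * deriv \<psi> y) * deriv (deriv \<phi>) y = 0"
    unfolding psi''_eq[OF y] phi''_eq[OF y] by (simp add: algebra_simps)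
  have "c1 y * deriv (deriv \<psi>) y + c2 y * deriv (deriv \<phi>) y = ((r * \<phi> y - \<mu> y * deriv \<phi> y) * deriv (deriv \<psi>) y - (r * \<psi> y - \<mu> y * deriv \<psi> y) * deriv (deriv \<phi>) y) / (r * wr y)"
    unfolding c1_def c2_def using w r_pos by (simp add: field_simps)
  also have "\<dots> = 0" using e by simp
  finally show ?thesis .
qed

lemma den_eq: assumes y: "y \<in> S"
  shows "deriv \<psi> y * deriv (deriv \<phi>) y - deriv \<phi> y * deriv (deriv \<psi>) y = 2 * r * wr y / (\<sigma> y)\<^sup>2"
proof -
  have s: "(\<sigma> y)\<^sup>2 \<noteq> 0" using sigma_pos y by auto
  show ?thesis using s unfolding psi''_eq[OF y] phi''_eq[OF y] wr_def by (simp add: field_simps)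
qed

lemma I4: "y \<in> S \<Longrightarrow> c1d y * \<psi> y + c2d y * \<phi> y = deriv \<mu> y / r - 1"
proof -
  assume y: "y \<in> S"
  have d1: "((\<lambda>y. c1 y * \<psi> y + c2 y * \<phi> y) has_real_derivative
      (c1d y * \<psi> y + c1 y * deriv \<psi> y + (c2d y * \<phi> y + c2 y * deriv \<phi> y))) (at y)"
    apply (rule DERIV_cong)
     apply (rule DERIV_add DERIV_mult c1_d[OF y] c2_d[OF y] psi_d[OF y] phi_d[OF y])+
    apply (simp add: algebra_simps)
    done
  have d2: "((\<lambda>y. c1 y * \<psi> y + c2 y * \<phi> y) has_real_derivative deriv \<mu> y / r) (at y)"
  proof (rule has_field_derivative_transform_within_open[OF _ S_open y])
    show "((\<lambda>y. \<mu> y / r) has_real_derivative deriv \<mu> y / r) (at y)"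
      by (rule DERIV_cdivide[OF mu_d[OF y]])
  qed (simp add: I1)
  have "c1d y * \<psi> y + c1 y * deriv \<psi> y + (c2d y * \<phi> y + c2 y * deriv \<phi> y) = deriv \<mu> y / r"
    using DERIV_unique[OF d1 d2] .
  then show ?thesis using I2[OF y] by linarith
qed

lemma I5: assumes y: "y \<in> S" shows "deriv (deriv \<phi>) y /
     (deriv \<psi> y * deriv (deriv \<phi>) y - deriv \<phi> y * deriv (deriv \<psi>) y) = c1 y"
proof -
  have w: "wr y \<noteq> 0" using wr_pos[OF y] by simp
  have s: "\<sigma> y \<noteq> 0" using sigma_pos y by auto
  show ?thesis unfolding den_eq[OF y] unfolding phi''_eq[OF y] c1_def using w s r_pos
    by (simp add: field_simps)
qed

lemma I6: assumes y: "y \<in> S" shows "deriv (deriv \<psi>) y /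
     (deriv \<psi> y * deriv (deriv \<phi>) y - deriv \<phi> y * deriv (deriv \<psi>) y) = - c2 y"
proof -
  have w: "wr y \<noteq> 0" using wr_pos[OF y] by simp
  have s: "\<sigma> y \<noteq> 0" using sigma_pos y by auto
  show ?thesis unfolding den_eq[OF y] unfolding psi''_eq[OF y] c2_def using w s r_pos
    by (simp add: field_simps)
qed

end



lemma cont_cases_pair:
  fixes P Q :: "real \<times> real \<Rightarrow> real"
  assumes "continuous_on A P" "continuous_on A Q" "\<And>z. z \<in> A \<Longrightarrow> fst z = snd z \<Longrightarrow> P z = Q z"
  shows "continuous_on A (\<lambda>z. if fst z \<le> snd z then P z else Q z)"
proof -
  have eq: "(\<lambda>z. if fst z \<le> snd z then P z else Q z) = (\<lambda>z. if fst z - snd z \<le> 0 then P z else Q z)"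
    by auto
  have h: "continuous_on A (\<lambda>x. fst x - snd x)" by (intro continuous_intros)
  show ?thesis unfolding eq
    by (rule continuous_on_cases_le)
       (auto intro: continuous_on_subset[OF assms(1)] continuous_on_subset[OF assms(2)] assms(3) h)
qed

context LS begin

definition "K x y = c1 y * \<psi> x + c2 y * \<phi> x"
definition "H x y = (if x \<le> y then K x y else x - y + \<mu> y / r)"
definition "Hx x y = (if x \<le> y then c1 y * deriv \<psi> x + c2 y * deriv \<phi> x else 1)"
definition "Hxx x y = (if x \<le> y then c1 y * deriv (deriv \<psi>) x + c2 y * deriv (deriv \<phi>) x else 0)"
definition "Hy x y = (if x \<le> y then c1d y * \<psi> x + c2d y * \<phi> x else deriv \<mu> y / r - 1)"

lemma lin_dx: "((\<lambda>x. x - y + \<mu> y / r) has_real_derivative 1) (at x)"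
  apply (rule DERIV_cong)
   apply (rule DERIV_add DERIV_diff DERIV_ident DERIV_const)+
  apply simp
  done

lemma HP1: assumes x: "x \<in> S" and y: "y \<in> S"
  shows "((\<lambda>x. H x y) has_real_derivative Hx x y) (at x)"
proof -
  have dK: "((\<lambda>x. K x y) has_real_derivative c1 y * deriv \<psi> x + c2 y * deriv \<phi> x) (at x)"
    unfolding K_def by (intro DERIV_add DERIV_cmult psi_d phi_d x)
  consider "x < y" | "x > y" | "x = y" by linarith
  then show ?thesis
  proof cases
    case 1
    have e: "Hx x y = c1 y * deriv \<psi> x + c2 y * deriv \<phi> x" using 1 by (simp add: Hx_def)
    show ?thesis unfolding e
      by (rule has_field_derivative_transform_within_open[OF dK, where S="{..<y}"])
         (use 1 in \<open>auto simp: H_def\<close>)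
  next
    case 2
    have e: "Hx x y = 1" using 2 by (simp add: Hx_def)
    show ?thesis unfolding e
      by (rule has_field_derivative_transform_within_open[OF lin_dx, where S="{y<..}"])
         (use 2 in \<open>auto simp: H_def\<close>)
  next
    case 3
    have e: "Hx x y = c1 y * deriv \<psi> y + c2 y * deriv \<phi> y" using 3 by (simp add: Hx_def)
    have p: "((\<lambda>x. K x y) has_real_derivative c1 y * deriv \<psi> y + c2 y * deriv \<phi> y) (at y)"
      using dK 3 by simp
    have q: "((\<lambda>x. x - y + \<mu> y / r) has_real_derivative c1 y * deriv \<psi> y + c2 y * deriv \<phi> y) (at y)"
      using lin_dx[of y y] I2[OF y] by simp
    have g1: "\<And>t. t \<le> y \<Longrightarrow> H t y = K t y" by (simp add: H_def)
    have g2: "\<And>t. t \<ge> y \<Longrightarrow> H t y = t - y + \<mu> y / r"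
      using I1[OF y] by (auto simp: H_def K_def)
    show ?thesis using glue_deriv[OF p q, of "\<lambda>t. H t y"] g1 g2 e 3 by simp
  qed
qed

lemma HP2: assumes x: "x \<in> S" and y: "y \<in> S"
  shows "((\<lambda>x. Hx x y) has_real_derivative Hxx x y) (at x)"
proof -
  have dK: "((\<lambda>x. c1 y * deriv \<psi> x + c2 y * deriv \<phi> x) has_real_derivative
       c1 y * deriv (deriv \<psi>) x + c2 y * deriv (deriv \<phi>) x) (at x)"
    by (intro DERIV_add DERIV_cmult psi_dd phi_dd x)
  have dc: "((\<lambda>x::real. 1::real) has_real_derivative 0) (at x)" for x by simp
  consider "x < y" | "x > y" | "x = y" by linarith
  then show ?thesis
  proof cases
    case 1
    have e: "Hxx x y = c1 y * deriv (deriv \<psi>) x + c2 y * deriv (deriv \<phi>) x" using 1 by (simp add: Hxx_def)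
    show ?thesis unfolding e
      by (rule has_field_derivative_transform_within_open[OF dK, where S="{..<y}"])
         (use 1 in \<open>auto simp: Hx_def\<close>)
  next
    case 2
    have e: "Hxx x y = 0" using 2 by (simp add: Hxx_def)
    show ?thesis unfolding e
      by (rule has_field_derivative_transform_within_open[OF dc, where S="{y<..}"])
         (use 2 in \<open>auto simp: Hx_def\<close>)
  next
    case 3
    have e: "Hxx x y = c1 y * deriv (deriv \<psi>) y + c2 y * deriv (deriv \<phi>) y" using 3 by (simp add: Hxx_def)
    have p: "((\<lambda>x. c1 y * deriv \<psi> x + c2 y * deriv \<phi> x) has_real_derivative c1 y * deriv (deriv \<psi>) y + c2 y * deriv (deriv \<phi>) y) (at y)"
      using dK 3 by simp
    have q: "((\<lambda>x. 1) has_real_derivative c1 y * deriv (deriv \<psi>) y + c2 y * deriv (deriv \<phi>) y) (at y)"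
      using I3[OF y] by simp
    have g1: "\<And>t. t \<le> y \<Longrightarrow> Hx t y = c1 y * deriv \<psi> t + c2 y * deriv \<phi> t" by (simp add: Hx_def)
    have g2: "\<And>t. t \<ge> y \<Longrightarrow> Hx t y = 1"
      using I2[OF y] by (auto simp: Hx_def)
    show ?thesis using glue_deriv[OF p q, of "\<lambda>t. Hx t y"] g1 g2 e 3 by simp
  qed
qed

lemma HP3: assumes x: "x \<in> S" and y: "y \<in> S"
  shows "((\<lambda>y. H x y) has_real_derivative Hy x y) (at y)"
proof -
  have dK: "((\<lambda>y. K x y) has_real_derivative c1d y * \<psi> x + c2d y * \<phi> x) (at y)"
    unfolding K_def
    apply (rule DERIV_cong)
     apply (rule DERIV_add DERIV_mult c1_d[OF y] c2_d[OF y] DERIV_const)+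
    apply simp
    done
  have dL: "((\<lambda>y. x - y + \<mu> y / r) has_real_derivative deriv \<mu> y / r - 1) (at y)"
    if "y \<in> S" for y
    apply (rule DERIV_cong)
     apply (rule DERIV_add DERIV_diff DERIV_ident DERIV_const DERIV_cdivide mu_d[OF that])+
    apply simp
    done
  consider "y > x" | "y < x" | "x = y" by linarith
  then show ?thesis
  proof cases
    case 1
    have e: "Hy x y = c1d y * \<psi> x + c2d y * \<phi> x" using 1 by (simp add: Hy_def)
    show ?thesis unfolding e
      by (rule has_field_derivative_transform_within_open[OF dK, where S="{x<..}"])
         (use 1 in \<open>auto simp: H_def\<close>)
  next
    case 2
    have e: "Hy x y = deriv \<mu> y / r - 1" using 2 by (simp add: Hy_def)
    show ?thesis unfolding e
      by (rule has_field_derivative_transform_within_open[OF dL[OF y], where S="{..<x}"])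
         (use 2 in \<open>auto simp: H_def\<close>)
  next
    case 3
    have e: "Hy x y = c1d x * \<psi> x + c2d x * \<phi> x" using 3 by (simp add: Hy_def)
    have p: "((\<lambda>t. x - t + \<mu> t / r) has_real_derivative c1d x * \<psi> x + c2d x * \<phi> x) (at x)"
      using dL[OF x] I4[OF x] by simp
    have q: "((\<lambda>t. K x t) has_real_derivative c1d x * \<psi> x + c2d x * \<phi> x) (at x)"
      using dK 3 by simp
    have g1: "\<And>t. t \<le> x \<Longrightarrow> H x t = x - t + \<mu> t / r"
      using I1[OF x] by (auto simp: H_def K_def)
    have g2: "\<And>t. t \<ge> x \<Longrightarrow> H x t = K x t" by (simp add: H_def)
    show ?thesis using glue_deriv[OF p q, of "\<lambda>t. H x t"] g1 g2 e 3 by simp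
  qed
qed

lemma HP4:
  "continuous_on (S \<times> S) (\<lambda>z. H (fst z) (snd z))"
  "continuous_on (S \<times> S) (\<lambda>z. Hx (fst z) (snd z))"
  "continuous_on (S \<times> S) (\<lambda>z. Hxx (fst z) (snd z))"
  "continuous_on (S \<times> S) (\<lambda>z. Hy (fst z) (snd z))"
proof -
  note c = cont_fst[OF psi_c] cont_fst[OF phi_c] cont_fst[OF psi'_c] cont_fst[OF phi'_c]
    cont_fst[OF psi''_c] cont_fst[OF phi''_c] cont_snd[OF c1_c] cont_snd[OF c2_c]
    cont_snd[OF c1d_c] cont_snd[OF c2d_c] cont_snd[OF mu_c] cont_snd[OF mu'_c]
  show "continuous_on (S \<times> S) (\<lambda>z. H (fst z) (snd z))"
    unfolding H_def K_def
    by (rule cont_cases_pair) (use r_pos in \<open>auto intro!: continuous_intros c simp: I1\<close>)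
  show "continuous_on (S \<times> S) (\<lambda>z. Hx (fst z) (snd z))"
    unfolding Hx_def
    by (rule cont_cases_pair) (use r_pos in \<open>auto intro!: continuous_intros c simp: I2\<close>)
  show "continuous_on (S \<times> S) (\<lambda>z. Hxx (fst z) (snd z))"
    unfolding Hxx_def
    by (rule cont_cases_pair) (use r_pos in \<open>auto intro!: continuous_intros c simp: I3\<close>)
  show "continuous_on (S \<times> S) (\<lambda>z. Hy (fst z) (snd z))"
    unfolding Hy_def
    by (intro cont_cases_pair) (use r_pos in \<open>auto intro!: continuous_intros c simp: I4\<close>)
qed

end



lemma cont_deriv_on: "(\<And>x. x \<in> J \<Longrightarrow> (g has_real_derivative g' x) (at x)) \<Longrightarrow> continuous_on J g"
  by (meson DERIV_isCont continuous_at_imp_continuous_on)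

lemma L1:
  fixes P Q P' Q' :: "real \<Rightarrow> real" and w :: "real \<Rightarrow> real \<Rightarrow> real"
  assumes J: "open J" "J \<subseteq> {0<..}"
    and Pd: "\<And>m. m \<in> J \<Longrightarrow> (P has_real_derivative P' m) (at m)"
    and Qd: "\<And>m. m \<in> J \<Longrightarrow> (Q has_real_derivative Q' m) (at m)"
    and cP: "continuous_on J P'" and cQ: "continuous_on J Q'"
    and A: "A \<subseteq> {0<..} \<times> J"
    and eq: "\<And>x m. (x, m) \<in> A \<Longrightarrow> w x m = x * P m + Q m"
  shows "C21_on A w"
  unfolding C21_on_def
proof (intro exI conjI)
  let ?V = "{0::real<..} \<times> J"
  show "open ?V" using J by (intro open_Times) (auto simp: open_greaterThan)
  show "A \<subseteq> ?V" by fact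
  show "?V \<subseteq> {0<..} \<times> {0<..}" using J by auto
  show "\<forall>(x, m)\<in>A. x * P m + Q m = w x m" using eq by auto
  have cPP: "continuous_on J P" by (rule cont_deriv_on, erule Pd)
  have cQQ: "continuous_on J Q" by (rule cont_deriv_on, erule Qd)
  show "C21_open ?V (\<lambda>x m. x * P m + Q m)"
    unfolding C21_open_def
  proof (rule exI[of _ "\<lambda>x m. P m"], rule exI[of _ "\<lambda>x m. 0"], rule exI[of _ "\<lambda>x m. x * P' m + Q' m"], intro conjI)
    show "continuous_on ?V (\<lambda>(x, m). x * P m + Q m)"
      unfolding case_prod_unfold
      by (intro continuous_intros cont_snd[OF cPP] cont_snd[OF cQQ])
    show "continuous_on ?V (\<lambda>(x, m). P m)"
      unfolding case_prod_unfold by (intro cont_snd[OF cPP])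
    show "continuous_on ?V (\<lambda>(x, m). 0::real)" by (simp add: case_prod_unfold)
    show "continuous_on ?V (\<lambda>(x, m). x * P' m + Q' m)"
      unfolding case_prod_unfold
      by (intro continuous_intros cont_snd[OF cP] cont_snd[OF cQ])
    have *: "((\<lambda>y. y * P m + Q m) has_real_derivative P m) (at x) \<and>
        ((\<lambda>y. P m) has_real_derivative 0) (at x) \<and>
        ((\<lambda>n. x * P n + Q n) has_real_derivative x * P' m + Q' m) (at m)" if "m \<in> J" for x m :: real
    proof (intro conjI)
      show "((\<lambda>y. y * P m + Q m) has_real_derivative P m) (at x)"
        apply (rule DERIV_cong)
         apply (rule DERIV_add DERIV_mult DERIV_ident DERIV_const)+
        apply simp
        done
      show "((\<lambda>y. P m) has_real_derivative 0) (at x)" by simp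
      show "((\<lambda>n. x * P n + Q n) has_real_derivative x * P' m + Q' m) (at m)"
        by (intro DERIV_add DERIV_cmult Pd Qd \<open>m \<in> J\<close>)
    qed
    show "\<forall>(x, m)\<in>?V. ((\<lambda>y. y * P m + Q m) has_real_derivative P m) (at x) \<and>
        ((\<lambda>y. P m) has_real_derivative 0) (at x) \<and>
        ((\<lambda>n. x * P n + Q n) has_real_derivative x * P' m + Q' m) (at m)"
      using * by auto
  qed
qed

context LS begin

lemma L2:
  fixes FF FF' \<beta> \<beta>' :: "real \<Rightarrow> real" and w :: "real \<Rightarrow> real \<Rightarrow> real"
  assumes J: "open J" "J \<subseteq> {0<..}"
    and Fd: "\<And>m. m \<in> J \<Longrightarrow> (FF has_real_derivative FF' m) (at m)"
    and bd: "\<And>m. m \<in> J \<Longrightarrow> (\<beta> has_real_derivative \<beta>' m) (at m)"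
    and cF: "continuous_on J FF'" and cb: "continuous_on J \<beta>'"
    and bS: "\<And>m. m \<in> J \<Longrightarrow> \<beta> m \<in> S"
    and A: "A \<subseteq> {0<..} \<times> J"
    and eq: "\<And>x m. (x, m) \<in> A \<Longrightarrow> w x m = FF m * H x (\<beta> m)"
  shows "C21_on A w"
  unfolding C21_on_def
proof (intro exI conjI)
  let ?V = "{0::real<..} \<times> J"
  show "open ?V" using J by (intro open_Times) (auto simp: open_greaterThan)
  show "A \<subseteq> ?V" by fact
  show "?V \<subseteq> {0<..} \<times> {0<..}" using J by auto
  show "\<forall>(x, m)\<in>A. FF m * H x (\<beta> m) = w x m" using eq by auto
  have cFF: "continuous_on J FF" by (rule cont_deriv_on, erule Fd)
  have cbb: "continuous_on J \<beta>" by (rule cont_deriv_on, erule bd)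
  have cpair: "continuous_on ?V (\<lambda>z. (fst z, \<beta> (snd z)))"
    by (intro continuous_intros cont_snd[OF cbb])
  have img: "(\<lambda>z. (fst z, \<beta> (snd z))) ` ?V \<subseteq> S \<times> S" using S_sub bS by auto
  have comp: "continuous_on ?V (\<lambda>z. G (fst z) (\<beta> (snd z)))"
    if "continuous_on (S \<times> S) (\<lambda>z. G (fst z) (snd z))" for G
    using continuous_on_compose2[OF that cpair img] by simp
  note cs = comp[OF HP4(1)] comp[OF HP4(2)] comp[OF HP4(3)] comp[OF HP4(4)]
    cont_snd[OF cFF] cont_snd[OF cF] cont_snd[OF cb]
  show "C21_open ?V (\<lambda>x m. FF m * H x (\<beta> m))"
    unfolding C21_open_def
  proof (rule exI[of _ "\<lambda>x m. FF m * Hx x (\<beta> m)"], rule exI[of _ "\<lambda>x m. FF m * Hxx x (\<beta> m)"],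
      rule exI[of _ "\<lambda>x m. FF' m * H x (\<beta> m) + FF m * (Hy x (\<beta> m) * \<beta>' m)"], intro conjI)
    show "continuous_on ?V (\<lambda>(x, m). FF m * H x (\<beta> m))"
      unfolding case_prod_unfold by (intro continuous_intros cs)
    show "continuous_on ?V (\<lambda>(x, m). FF m * Hx x (\<beta> m))"
      unfolding case_prod_unfold by (intro continuous_intros cs)
    show "continuous_on ?V (\<lambda>(x, m). FF m * Hxx x (\<beta> m))"
      unfolding case_prod_unfold by (intro continuous_intros cs)
    show "continuous_on ?V (\<lambda>(x, m). FF' m * H x (\<beta> m) + FF m * (Hy x (\<beta> m) * \<beta>' m))"
      unfolding case_prod_unfold by (intro continuous_intros cs)
    have *: "((\<lambda>y. FF m * H y (\<beta> m)) has_real_derivative FF m * Hx x (\<beta> m)) (at x) \<and>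
        ((\<lambda>y. FF m * Hx y (\<beta> m)) has_real_derivative FF m * Hxx x (\<beta> m)) (at x) \<and>
        ((\<lambda>n. FF n * H x (\<beta> n)) has_real_derivative FF' m * H x (\<beta> m) + FF m * (Hy x (\<beta> m) * \<beta>' m)) (at m)"
      if x: "x > 0" and m: "m \<in> J" for x m :: real
    proof (intro conjI)
      have xS: "x \<in> S" using x S_ge0 by auto
      show "((\<lambda>y. FF m * H y (\<beta> m)) has_real_derivative FF m * Hx x (\<beta> m)) (at x)"
        by (intro DERIV_cmult HP1 xS bS m)
      show "((\<lambda>y. FF m * Hx y (\<beta> m)) has_real_derivative FF m * Hxx x (\<beta> m)) (at x)"
        by (intro DERIV_cmult HP2 xS bS m)
      have ch: "((\<lambda>n. H x (\<beta> n)) has_real_derivative Hy x (\<beta> m) * \<beta>' m) (at m)"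
        by (rule DERIV_chain2[OF HP3[OF xS bS[OF m]] bd[OF m]])
      show "((\<lambda>n. FF n * H x (\<beta> n)) has_real_derivative FF' m * H x (\<beta> m) + FF m * (Hy x (\<beta> m) * \<beta>' m)) (at m)"
        using DERIV_mult[OF Fd[OF m] ch] by (simp add: algebra_simps)
    qed
    show "\<forall>(x, m)\<in>?V. ((\<lambda>y. FF m * H y (\<beta> m)) has_real_derivative FF m * Hx x (\<beta> m)) (at x) \<and>
        ((\<lambda>y. FF m * Hx y (\<beta> m)) has_real_derivative FF m * Hxx x (\<beta> m)) (at x) \<and>
        ((\<lambda>n. FF n * H x (\<beta> n)) has_real_derivative FF' m * H x (\<beta> m) + FF m * (Hy x (\<beta> m) * \<beta>' m)) (at m)"
      using * by auto
  qed
qed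

end



context LS begin

lemma f_c: "continuous_on {0..ybar} f"
  using f_lip lipschitz_on_continuous_on by blast

lemma f_int_sub: "m \<ge> 0 \<Longrightarrow> set_integrable lborel {0..m} f"
  by (rule set_integrable_subset[OF f_int]) (auto intro: S_ge0)

lemma F_int: assumes m: "m \<ge> 0" shows "F m = integral {0..m} f" "f integrable_on {0..m}"
proof -
  have mS: "m \<in> S" using S_ge0 m by auto
  have "F m = (LINT y:{y\<in>S. y \<le> m}|lborel. f y)" using F_def mS by auto
  also have "\<dots> = (LINT y:{0..m}|lborel. f y)"
    unfolding set_lebesgue_integral_def
  proof (rule Bochner_Integration.integral_cong[OF refl])
    fix y
    show "indicator {y \<in> S. y \<le> m} y *\<^sub>R f y = indicator {0..m} y *\<^sub>R f y"
    proof (cases "y \<in> {0..m}")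
      case True then show ?thesis using S_ge0 by (auto simp: indicator_def)
    next
      case False
      then show ?thesis using f_zero by (auto simp: indicator_def)
    qed
  qed
  also have "\<dots> = integral {0..m} f" using set_borel_integral_eq_integral(2)[OF f_int_sub[OF m]] .
  finally show "F m = integral {0..m} f" .
  show "f integrable_on {0..m}" using set_borel_integral_eq_integral(1)[OF f_int_sub[OF m]] .
qed

lemma F_one: assumes m: "m \<ge> ybar" shows "F m = 1"
proof -
  have mS: "m \<in> S" using S_ge0 m ybar_pos by auto
  have "F m = (LINT y:{y\<in>S. y \<le> m}|lborel. f y)" using F_def mS by auto
  also have "\<dots> = (LINT y:S|lborel. f y)"
    unfolding set_lebesgue_integral_def
  proof (rule Bochner_Integration.integral_cong[OF refl])
    fix y
    show "indicator {y \<in> S. y \<le> m} y *\<^sub>R f y = indicator S y *\<^sub>R f y"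
      using f_zero m by (auto simp: indicator_def)
  qed
  finally show ?thesis using f_total by simp
qed

definition "ft t = f (max 0 (min t ybar))"
definition "Ft m = integral {0..m} ft"

lemma ft_c: "continuous_on A ft"
proof -
  have "continuous_on UNIV (\<lambda>t. max 0 (min t ybar))" by (intro continuous_intros)
  moreover have "(\<lambda>t. max 0 (min t ybar)) ` UNIV \<subseteq> {0..ybar}" using ybar_pos by auto
  ultimately have "continuous_on UNIV ft" unfolding ft_def
    using continuous_on_compose2[OF f_c] by blast
  then show ?thesis using continuous_on_subset by blast
qed

lemma ft_eq: "t \<in> {0..ybar} \<Longrightarrow> ft t = f t" by (simp add: ft_def)
lemma ft_pos: "ft t > 0" unfolding ft_def using f_pos ybar_pos by auto

lemma F_Ft: assumes "m \<in> {0..ybar}" shows "F m = Ft m"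
proof -
  have "F m = integral {0..m} f" using F_int(1)[of m] assms by auto
  also have "\<dots> = Ft m" unfolding Ft_def using assms by (intro integral_cong) (auto simp: ft_eq)
  finally show ?thesis .
qed

lemma Ft_d: assumes m: "m > 0" shows "(Ft has_real_derivative ft m) (at m)"
proof -
  have "(Ft has_vector_derivative ft m) (at m within {0..m+1})"
    unfolding Ft_def by (rule integral_has_vector_derivative[OF ft_c]) (use m in auto)
  then have "(Ft has_vector_derivative ft m) (at m)"
    using at_within_Icc_at[of 0 m "m+1"] m by simp
  then show ?thesis by (simp add: has_real_derivative_iff_has_vector_derivative)
qed

lemma Ft_c: "continuous_on {0..Kb} Ft"
  unfolding Ft_def by (rule indefinite_integral_continuous_1, rule integrable_continuous_interval, rule ft_c)

lemma Ft_ybar: "Ft ybar = 1" using F_Ft[of ybar] F_one[of ybar] ybar_pos by simp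

lemma F_Ft_min: "m \<ge> 0 \<Longrightarrow> F m = Ft (min m ybar)"
  using F_Ft[of m] F_one[of m] Ft_ybar by (cases "m \<le> ybar") auto

lemma F_c: "continuous_on {0..Kb} F"
proof -
  have "continuous_on {0..Kb} (\<lambda>m. Ft (min m ybar))"
    by (rule continuous_on_compose2[OF Ft_c[of ybar]]) (use ybar_pos in \<open>auto intro!: continuous_intros\<close>)
  then show ?thesis by (rule continuous_on_cong[THEN iffD1, rotated 2]) (auto simp: F_Ft_min)
qed

lemma F_pos: assumes m: "m > 0" shows "F m > 0"
proof (cases "m \<le> ybar")
  case True
  have "Ft 0 < Ft m"
  proof (rule DERIV_pos_imp_increasing_open[OF m])
    show "\<And>x. 0 < x \<Longrightarrow> x < m \<Longrightarrow> \<exists>y. (Ft has_real_derivative y) (at x) \<and> 0 < y"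
      using Ft_d ft_pos by blast
    show "continuous_on {0..m} Ft" by (rule Ft_c)
  qed
  moreover have "Ft 0 = 0" by (simp add: Ft_def)
  ultimately show ?thesis using F_Ft[of m] True m by simp
next
  case False then show ?thesis using F_one by simp
qed

lemma F_nonneg: "m \<ge> 0 \<Longrightarrow> F m \<ge> 0"
  using F_pos[of m] F_Ft[of 0] ybar_pos by (cases "m = 0") (auto simp: Ft_def)

definition "G s = U s * ft s + Ft s"
definition "Psi m = integral {mbar/2..m} G"

lemma U_c': "continuous_on {a..c} U" if "a \<ge> 0" for a c
  using continuous_on_subset[OF U_cont] that by auto

lemma G_c: "continuous_on {a..c} G" if "a \<ge> 0" for a c
  unfolding G_def by (intro continuous_intros U_c' ft_c continuous_on_subset[OF Ft_c[of c]]) (use that in auto)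

lemma Psi_d: assumes m: "m > mbar/2" shows "(Psi has_real_derivative G m) (at m)"
proof -
  have "(Psi has_vector_derivative G m) (at m within {mbar/2..m+1})"
    unfolding Psi_def by (rule integral_has_vector_derivative[OF G_c]) (use m mbar_mem in auto)
  then have "(Psi has_vector_derivative G m) (at m)"
    using at_within_Icc_at[of "mbar/2" m "m+1"] m by simp
  then show ?thesis by (simp add: has_real_derivative_iff_has_vector_derivative)
qed

lemma G_eq: "s \<in> {0..ybar} \<Longrightarrow> G s = U s * f s + F s"
  by (simp add: G_def ft_eq F_Ft)

lemma lbint_ftc: assumes "mbar \<le> m" "m \<le> ybar"
  shows "(LBINT s=mbar..m. U s * f s + F s) = Psi m - Psi mbar"
proof (rule interval_integral_FTC_finite)
  have sub: "{min mbar m..max mbar m} \<subseteq> {0..ybar}" using assms mbar_mem by auto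
  show "continuous_on {min mbar m..max mbar m} (\<lambda>s. U s * f s + F s)"
    by (rule continuous_on_cong[THEN iffD1, OF refl _ continuous_on_subset[OF G_c[of 0 ybar] sub]])
       (use sub in \<open>auto intro!: G_eq\<close>)
  fix x assume x: "min mbar m \<le> x" "x \<le> max mbar m"
  have "(Psi has_real_derivative G x) (at x)" by (rule Psi_d) (use x mbar_mem assms in auto)
  then have "(Psi has_vector_derivative G x) (at x within {min mbar m..max mbar m})"
    by (simp add: has_real_derivative_iff_has_vector_derivative has_vector_derivative_at_within)
  moreover have "x \<in> {0..ybar}" using x assms mbar_mem by (auto simp: min_def max_def)
  then have "G x = U x * f x + F x" using G_eq by auto
  ultimately show "(Psi has_vector_derivative U x * f x + F x) (at x within {min mbar m..max mbar m})"
    by simp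
qed

lemma lbint_one: assumes "ybar \<le> a" "a \<le> m"
  shows "(LBINT s=a..m. U s * f s + F s) = m - a"
proof -
  have "(LBINT s=a..m. U s * f s + F s) = (LBINT s=a..m. 1)"
  proof (rule interval_lebesgue_integral_cong)
    fix s assume "s \<in> einterval (ereal a) (ereal m)"
    then have s: "a < s" "s < m" by auto
    have "s \<in> S" using s assms ybar_pos S_ge0 by auto
    then have "f s = 0" using f_zero s assms by auto
    moreover have "F s = 1" using F_one s assms by auto
    ultimately show "U s * f s + F s = 1" by simp
  qed (use assms in auto)
  also have "\<dots> = m - a" by simp
  finally show ?thesis .
qed

lemma lbint_split: assumes "mbar < ybar" "ybar \<le> m"
  shows "(LBINT s=mbar..m. U s * f s + F s) = (LBINT s=mbar..ybar. U s * f s + F s) + (m - ybar)"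
proof -
  let ?g = "\<lambda>s. U s * f s + F s"
  have i1: "set_integrable lborel {mbar..ybar} ?g"
  proof (rule borel_integrable_atLeastAtMost')
    show "continuous_on {mbar..ybar} ?g"
      by (rule continuous_on_cong[THEN iffD1, OF refl _ G_c[of mbar ybar]])
         (use G_eq mbar_mem in auto)
  qed
  have i2: "set_integrable lborel {ybar<..m} ?g"
  proof -
    have "set_integrable lborel {ybar..m} (\<lambda>s. 1::real)"
      by (rule borel_integrable_atLeastAtMost') (rule continuous_on_const)
    then have "set_integrable lborel {ybar<..m} (\<lambda>s. 1::real)"
      by (rule set_integrable_subset) auto
    moreover have "\<And>s. s \<in> {ybar<..m} \<Longrightarrow> ?g s = 1"
    proof -
      fix s assume s: "s \<in> {ybar<..m}"
      have "s \<in> S" using s ybar_pos S_ge0 by auto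
      then show "?g s = 1" using f_zero F_one s by auto
    qed
    ultimately show ?thesis using set_integrable_cong[OF refl refl, of "{ybar<..m}" ?g "\<lambda>s. 1"] by simp
  qed
  have "set_integrable lborel ({mbar..ybar} \<union> {ybar<..m}) ?g"
    by (rule set_integrable_Un[OF i1 i2]) auto
  then have "set_integrable lborel {mbar<..<m} ?g"
    by (rule set_integrable_subset) auto
  then have "interval_lebesgue_integrable lborel (min (ereal mbar) (min (ereal ybar) (ereal m)))
      (max (ereal mbar) (max (ereal ybar) (ereal m))) ?g"
    using assms by (simp add: interval_lebesgue_integrable_def min_def max_def)
  from interval_integral_sum[OF this] lbint_one[of ybar m] assms show ?thesis by simp
qed

end



lemma C21_cont: "C21_on A w \<Longrightarrow> continuous_on A (\<lambda>(x, m). w x m)"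
proof -
  assume "C21_on A w"
  then obtain V g where V: "A \<subseteq> V" "C21_open V g" "\<forall>(x, m)\<in>A. g x m = w x m"
    unfolding C21_on_def by blast
  then have "continuous_on V (\<lambda>(x, m). g x m)" unfolding C21_open_def by blast
  then have "continuous_on A (\<lambda>(x, m). g x m)" using continuous_on_subset V(1) by blast
  then show ?thesis by (rule continuous_on_cong[THEN iffD1, rotated 2]) (use V(3) in auto)
qed

lemma closed_strip: "closed {(x::real, m::real). 0 \<le> m \<and> m \<le> x \<and> lo \<le> m \<and> m \<le> hi}"
proof -
  have "{(x::real, m::real). 0 \<le> m \<and> m \<le> x \<and> lo \<le> m \<and> m \<le> hi} =
     {z. 0 \<le> snd z} \<inter> {z. snd z \<le> fst z} \<inter> {z. lo \<le> snd z} \<inter> {z. snd z \<le> hi}" by auto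
  also have "closed \<dots>"
    by (intro closed_Int closed_Collect_le continuous_intros)
  finally show ?thesis .
qed

lemma closed_upper: "closed {(x::real, m::real). 0 \<le> m \<and> m \<le> x \<and> lo \<le> m}"
proof -
  have "{(x::real, m::real). 0 \<le> m \<and> m \<le> x \<and> lo \<le> m} =
     {z. 0 \<le> snd z} \<inter> {z. snd z \<le> fst z} \<inter> {z. lo \<le> snd z}" by auto
  also have "closed \<dots>"
    by (intro closed_Int closed_Collect_le continuous_intros)
  finally show ?thesis .
qed

context LS begin

lemma b_in: "m \<in> {0..xbar} \<Longrightarrow> b m \<in> {0..xbar}" using b_range by blast
lemma bS: "m \<in> {0..xbar} \<Longrightarrow> b m \<in> S" using b_in S_ge0 by auto
lemma b_ge0: "m \<in> {0..xbar} \<Longrightarrow> b m \<ge> 0" using b_in by auto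

lemma H_ge: "y \<in> S \<Longrightarrow> y \<le> x \<Longrightarrow> H x y = x - y + \<mu> y / r"
  using I1[of y] by (auto simp: H_def K_def)

lemma W_low: assumes m: "0 \<le> m" "m \<le> mbar"
  shows "Wfun \<psi> \<phi> \<mu> r U f F b mbar x m = F m * H x (b m)"
proof -
  have y: "b m \<in> S" using bS m mbar_mem by auto
  have A: "Acoef \<psi> \<phi> F b m = F m * c1 (b m)"
    unfolding Acoef_def by (simp add: I5[OF y, symmetric])
  have B: "Bcoef \<psi> \<phi> F b m = F m * c2 (b m)"
    unfolding Bcoef_def using I6[OF y] by (simp add: times_divide_eq_right[symmetric])
  show ?thesis
    unfolding Wfun_def H_def K_def using m A B by (simp add: algebra_simps)
qed

lemma W_up: assumes "m > mbar"
  shows "Wfun \<psi> \<phi> \<mu> r U f F b mbar x m =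
    \<mu> mbar / r * F mbar + (x - m) * F m + (LBINT s=mbar..m. U s * f s + F s)"
  using assms unfolding Wfun_def by simp

lemma W_at_mbar: assumes "x \<ge> mbar"
  shows "Wfun \<psi> \<phi> \<mu> r U f F b mbar x mbar = F mbar * (x - mbar + \<mu> mbar / r)"
proof -
  have "mbar \<in> S" using mbar_mem S_ge0 by auto
  then show ?thesis using W_low[of mbar x] mbar_mem mbar_fix H_ge[of mbar x] assms by simp
qed

definition "e m = Efun \<psi> \<phi> \<mu> r U f F (b m) m"

lemma e_cont: assumes yx: "ybar < xbar" shows "continuous_on {0<..ybar} e"
proof -
  let ?I = "{0<..ybar}"
  have sub: "?I \<subseteq> {0..xbar}" using yx by auto
  have bc: "continuous_on ?I b" using continuous_on_subset[OF b_cont sub] .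
  have img: "b ` ?I \<subseteq> S" using bS sub by auto
  have comp: "continuous_on ?I (\<lambda>m. g (b m))" if "continuous_on S g" for g
    using continuous_on_compose2[OF that bc img] .
  have IS: "?I \<subseteq> S" using S_ge0 by auto
  have own: "continuous_on ?I g" if "continuous_on S g" for g
    using continuous_on_subset[OF that IS] .
  have fc: "continuous_on ?I f" by (rule continuous_on_subset[OF f_c]) auto
  have Fc: "continuous_on ?I F" by (rule continuous_on_subset[OF F_c[of ybar]]) auto
  have Uc: "continuous_on ?I U" by (rule continuous_on_subset[OF U_cont]) auto
  obtain c where c: "c < r" "\<forall>x\<ge>0. deriv \<mu> x \<le> c" using mu'_bound by blast
  have nz1: "1 - deriv \<mu> (b m) / r \<noteq> 0" if "m \<in> ?I" for m
  proof -
    have "deriv \<mu> (b m) \<le> c" using c b_ge0[of m] that sub by auto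
    then have "deriv \<mu> (b m) / r < 1" using c r_pos by (simp add: divide_less_eq)
    then show ?thesis by linarith
  qed
  have nz2: "Dfun \<psi> \<phi> (b m) m \<noteq> 0" if "m \<in> ?I" for m
  proof -
    have "b m \<in> S" "m \<in> S" using img that IS by auto
    then show ?thesis using D_pos[of "b m" m] by simp
  qed
  have nz3: "F m \<noteq> 0" if "m \<in> ?I" for m using F_pos[of m] that by auto
  show ?thesis
    unfolding e_def Efun_def Nfun_def Dfun_def
    by (intro continuous_intros comp[OF psi_c] comp[OF phi_c] comp[OF psi'_c] comp[OF phi'_c]
        comp[OF mu_c] comp[OF mu'_c] own[OF psi_c] own[OF phi_c] fc Fc Uc)
       (use nz1 nz2 nz3 r_pos in \<open>auto simp: Dfun_def\<close>)
qed

end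



lemma glue_deriv_loc:
  fixes g p q :: "real \<Rightarrow> real"
  assumes "(p has_real_derivative D) (at a)" "(q has_real_derivative D) (at a)" "d > 0"
    and "\<And>t. a - d < t \<Longrightarrow> t \<le> a \<Longrightarrow> g t = p t" "\<And>t. a \<le> t \<Longrightarrow> t < a + d \<Longrightarrow> g t = q t"
  shows "(g has_real_derivative D) (at a)"
proof -
  have 1: "(g has_real_derivative D) (at a within {..a})"
    by (rule has_field_derivative_transform_within[of p D a "{..a}" d])
       (use assms in \<open>auto intro: has_field_derivative_at_within simp: dist_real_def\<close>)
  have 2: "(g has_real_derivative D) (at a within {a..})"
    by (rule has_field_derivative_transform_within[of q D a "{a..}" d])
       (use assms in \<open>auto intro: has_field_derivative_at_within simp: dist_real_def\<close>)
  have "(g has_real_derivative D) (at a within ({..a} \<union> {a..}))"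
    using 1 2 unfolding has_field_derivative_iff Lim_within_Un by blast
  moreover have "{..a} \<union> {a..} = (UNIV::real set)" by auto
  ultimately show ?thesis by simp
qed

context LS begin

definition "bt m = (if m \<le> ybar then b m else b ybar + e ybar * (m - ybar))"
definition "bt' m = e (min m ybar)"

lemma bt_props:
  assumes yx: "ybar < xbar"
  shows "\<And>m. m > 0 \<Longrightarrow> (bt has_real_derivative bt' m) (at m)"
    and "continuous_on {0<..} bt'"
    and "\<And>m. m \<in> {0<..ybar} \<Longrightarrow> bt m = b m"
proof -
  have mn: "min xbar ybar = ybar" using yx by simp
  have bd: "(b has_real_derivative e m) (at m)" if "0 < m" "m < ybar" for m
    using b_ode that mn unfolding e_def by auto
  have ec: "continuous_on {0<..ybar} e" by (rule e_cont[OF yx])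
  show "continuous_on {0<..} bt'"
    unfolding bt'_def
    by (rule continuous_on_compose2[OF ec]) (use ybar_pos in \<open>auto intro!: continuous_intros\<close>)
  show "\<And>m. m \<in> {0<..ybar} \<Longrightarrow> bt m = b m" by (simp add: bt_def)
  define eh where "eh t = e (max (ybar/2) (min t ybar))" for t
  have ehc: "continuous_on A eh" for A
  proof -
    have "continuous_on UNIV eh" unfolding eh_def
      by (rule continuous_on_compose2[OF ec]) (use ybar_pos in \<open>auto intro!: continuous_intros\<close>)
    then show ?thesis using continuous_on_subset by blast
  qed
  fix m :: real assume m: "m > 0"
  consider "m < ybar" | "m > ybar" | "m = ybar" by linarith
  then show "(bt has_real_derivative bt' m) (at m)"
  proof cases
    case 1
    have e: "bt' m = e m" using 1 by (simp add: bt'_def)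
    show ?thesis unfolding e
      by (rule has_field_derivative_transform_within_open[OF bd, where S="{0<..<ybar}"])
         (use m 1 in \<open>auto simp: bt_def\<close>)
  next
    case 2
    have e: "bt' m = e ybar" using 2 by (simp add: bt'_def)
    have dl: "((\<lambda>t. b ybar + e ybar * (t - ybar)) has_real_derivative e ybar) (at m)"
      apply (rule DERIV_cong)
       apply (rule DERIV_add DERIV_cmult DERIV_diff DERIV_ident DERIV_const)+
      apply simp
      done
    show ?thesis unfolding e
      by (rule has_field_derivative_transform_within_open[OF dl, where S="{ybar<..}"])
         (use 2 in \<open>auto simp: bt_def\<close>)
  next
    case 3
    have e: "bt' ybar = e ybar" by (simp add: bt'_def)
    have p: "((\<lambda>t. b (ybar/2) + integral {ybar/2..t} eh) has_real_derivative e ybar) (at ybar)"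
    proof -
      have "((\<lambda>t. integral {ybar/2..t} eh) has_vector_derivative eh ybar) (at ybar within {ybar/2..ybar+1})"
        by (rule integral_has_vector_derivative[OF ehc]) (use ybar_pos in auto)
      then have "((\<lambda>t. integral {ybar/2..t} eh) has_vector_derivative eh ybar) (at ybar)"
        using at_within_Icc_at[of "ybar/2" ybar "ybar+1"] ybar_pos by simp
      then have "((\<lambda>t. integral {ybar/2..t} eh) has_real_derivative eh ybar) (at ybar)"
        by (simp add: has_real_derivative_iff_has_vector_derivative)
      moreover have "eh ybar = e ybar" using ybar_pos by (simp add: eh_def)
      ultimately show ?thesis using DERIV_add[OF DERIV_const] by fastforce
    qed
    have q: "((\<lambda>t. b ybar + e ybar * (t - ybar)) has_real_derivative e ybar) (at ybar)"
      apply (rule DERIV_cong)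
       apply (rule DERIV_add DERIV_cmult DERIV_diff DERIV_ident DERIV_const)+
      apply simp
      done
    have g1: "bt t = b (ybar/2) + integral {ybar/2..t} eh" if t: "ybar - ybar/2 < t" "t \<le> ybar" for t
    proof -
      have "(eh has_integral (b t - b (ybar/2))) {ybar/2..t}"
      proof (rule fundamental_theorem_of_calculus_interior)
        show "ybar/2 \<le> t" using t by simp
        show "continuous_on {ybar/2..t} b"
          by (rule continuous_on_subset[OF b_cont]) (use t yx ybar_pos in auto)
        fix x assume x: "x \<in> {ybar/2<..<t}"
        have "(b has_real_derivative e x) (at x)" by (rule bd) (use x t ybar_pos in auto)
        moreover have "eh x = e x" using x t by (simp add: eh_def)
        ultimately show "(b has_vector_derivative eh x) (at x)"
          by (simp add: has_real_derivative_iff_has_vector_derivative)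
      qed
      then have "integral {ybar/2..t} eh = b t - b (ybar/2)" by (rule integral_unique)
      then show ?thesis using t by (simp add: bt_def)
    qed
    have g2: "bt t = b ybar + e ybar * (t - ybar)" if "ybar \<le> t" for t
      using that by (auto simp: bt_def)
    show ?thesis unfolding 3 e
      by (rule glue_deriv_loc[OF p q, of "ybar/2"]) (use g1 g2 ybar_pos in auto)
  qed
qed

end



lemma class_RI2:
  assumes "continuous_on Jset (\<lambda>(x, m). w x m)" "0 < a" "a < c"
    "C21_on {(x, m) \<in> Jset. 0 < m \<and> m \<le> a} w"
    "C21_on {(x, m) \<in> Jset. a \<le> m \<and> m \<le> c} w"
    "C21_on {(x, m) \<in> Jset. c \<le> m} w"
  shows "class_R w"
  unfolding class_R_def
proof (intro conjI exI[of _ "[a, c]"])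
  show "continuous_on Jset (\<lambda>(x, m). w x m)" by fact
  show "[a, c] \<noteq> []" by simp
  show "sorted_wrt (<) [a, c]" using assms by simp
  show "0 < [a, c] ! 0" using assms by simp
  show "\<forall>i\<le>length [a, c]. C21_on (piece [a, c] i) w"
  proof (intro allI impI)
    fix i assume "i \<le> length [a, c]"
    then have "i = 0 \<or> i = 1 \<or> i = 2" by auto
    then show "C21_on (piece [a, c] i) w" using assms by (auto simp: piece_def)
  qed
qed

lemma class_RI1:
  assumes "continuous_on Jset (\<lambda>(x, m). w x m)" "0 < a"
    "C21_on {(x, m) \<in> Jset. 0 < m \<and> m \<le> a} w"
    "C21_on {(x, m) \<in> Jset. a \<le> m} w"
  shows "class_R w"
  unfolding class_R_def
proof (intro conjI exI[of _ "[a]"])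
  show "continuous_on Jset (\<lambda>(x, m). w x m)" by fact
  show "[a] \<noteq> []" by simp
  show "sorted_wrt (<) [a]" by simp
  show "0 < [a] ! 0" using assms by simp
  show "\<forall>i\<le>length [a]. C21_on (piece [a] i) w"
  proof (intro allI impI)
    fix i assume "i \<le> length [a]"
    then have "i = 0 \<or> i = 1" by auto
    then show "C21_on (piece [a] i) w" using assms by (auto simp: piece_def)
  qed
qed

lemma strip_eq: "{(x, m) \<in> Jset. lo \<le> m \<and> m \<le> hi} = {(x, m). 0 \<le> m \<and> m \<le> x \<and> lo \<le> m \<and> m \<le> hi}"
  by (auto simp: Jset_def)
lemma upper_eq: "{(x, m) \<in> Jset. lo \<le> m} = {(x, m). 0 \<le> m \<and> m \<le> x \<and> lo \<le> m}"
  by (auto simp: Jset_def)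

context LS begin

abbreviation "W \<equiv> Wfun \<psi> \<phi> \<mu> r U f F b mbar"

lemma low_cont: "continuous_on {(x, m). 0 \<le> m \<and> m \<le> x \<and> 0 \<le> m \<and> m \<le> mbar} (\<lambda>(x, m). W x m)"
proof -
  let ?L = "{(x::real, m::real). 0 \<le> m \<and> m \<le> x \<and> 0 \<le> m \<and> m \<le> mbar}"
  have Fc: "continuous_on ?L (\<lambda>z. F (snd z))"
    by (rule continuous_on_compose2[OF F_c[of mbar] continuous_on_snd[OF continuous_on_id]]) auto
  have bc: "continuous_on ?L (\<lambda>z. b (snd z))"
    by (rule continuous_on_compose2[OF b_cont continuous_on_snd[OF continuous_on_id]])
       (use mbar_mem in auto)
  have pc: "continuous_on ?L (\<lambda>z. (fst z, b (snd z)))"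
    by (intro continuous_intros bc)
  have img: "(\<lambda>z. (fst z, b (snd z))) ` ?L \<subseteq> S \<times> S"
    using S_ge0 bS mbar_mem by fastforce
  have Hc: "continuous_on ?L (\<lambda>z. H (fst z) (b (snd z)))"
    using continuous_on_compose2[OF HP4(1) pc img] by simp
  have "continuous_on ?L (\<lambda>z. F (snd z) * H (fst z) (b (snd z)))"
    by (intro continuous_intros Fc Hc)
  then show ?thesis
    by (rule continuous_on_cong[THEN iffD1, rotated 2]) (auto simp: W_low)
qed

lemma upper_const: assumes ym: "ybar \<le> mbar"
  shows "C21_on {(x, m) \<in> Jset. mbar \<le> m} W"
proof (rule L1[where J="{mbar/2<..}" and P="\<lambda>_. 1" and P'="\<lambda>_. 0"
      and Q="\<lambda>_. \<mu> mbar / r - mbar" and Q'="\<lambda>_. 0"])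
  show "{(x, m) \<in> Jset. mbar \<le> m} \<subseteq> {0<..} \<times> {mbar/2<..}"
    using mbar_mem by (auto simp: Jset_def)
  show "{mbar / 2<..} \<subseteq> {0<..}" using mbar_mem by auto
  fix x m assume xm: "(x, m) \<in> {(x, m) \<in> Jset. mbar \<le> m}"
  then have m: "mbar \<le> m" "m \<le> x" by (auto simp: Jset_def)
  have F1: "F mbar = 1" using F_one ym by auto
  show "W x m = x * 1 + (\<mu> mbar / r - mbar)"
  proof (cases "m = mbar")
    case True
    then show ?thesis using W_at_mbar[of x] m F1 by simp
  next
    case False
    then have "m > mbar" using m by simp
    then show ?thesis using W_up[of m x] F1 F_one[of m] lbint_one[of mbar m] ym m by simp
  qed
qed auto

lemma main_i: assumes c1: "mbar < ybar" shows "class_R W"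
proof -
  have mlt: "mbar < min xbar ybar" using c1 mbar_mem by auto
  have P0: "C21_on {(x, m) \<in> Jset. 0 < m \<and> m \<le> mbar} W"
  proof (rule L2[where J="{0<..<min xbar ybar}" and FF=Ft and FF'=ft and \<beta>=b and \<beta>'=e])
    show "\<And>m. m \<in> {0<..<min xbar ybar} \<Longrightarrow> (Ft has_real_derivative ft m) (at m)"
      using Ft_d by auto
    show "\<And>m. m \<in> {0<..<min xbar ybar} \<Longrightarrow> (b has_real_derivative e m) (at m)"
      using b_ode unfolding e_def by auto
    show "continuous_on {0<..<min xbar ybar} ft" by (rule ft_c)
    show "continuous_on {0<..<min xbar ybar} e" using b_C1 unfolding e_def .
    show "\<And>m. m \<in> {0<..<min xbar ybar} \<Longrightarrow> b m \<in> S" using bS by auto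
    show "{(x, m) \<in> Jset. 0 < m \<and> m \<le> mbar} \<subseteq> {0<..} \<times> {0<..<min xbar ybar}"
      using mlt by (auto simp: Jset_def)
    fix x m assume "(x, m) \<in> {(x, m) \<in> Jset. 0 < m \<and> m \<le> mbar}"
    then have m: "0 < m" "m \<le> mbar" by (auto simp: Jset_def)
    show "W x m = Ft m * H x (b m)"
      using W_low[of m x] F_Ft[of m] m c1 by simp
  qed auto
  have Ftd: "\<And>m. m \<in> {mbar/2<..<ybar+1} \<Longrightarrow> (Ft has_real_derivative ft m) (at m)"
    using Ft_d mbar_mem by auto
  have Ftc: "continuous_on {mbar/2<..<ybar+1} Ft"
    by (rule cont_deriv_on, erule Ftd)
  have Gc: "continuous_on {mbar/2<..<ybar+1} G"
    by (rule continuous_on_subset[OF G_c[of "mbar/2" "ybar+1"]]) (use mbar_mem in auto)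
  have P1: "C21_on {(x, m) \<in> Jset. mbar \<le> m \<and> m \<le> ybar} W"
  proof (rule L1[where J="{mbar/2<..<ybar+1}" and P=Ft and P'=ft
      and Q="\<lambda>m. \<mu> mbar / r * F mbar - m * Ft m + (Psi m - Psi mbar)"
      and Q'="\<lambda>m. - (Ft m + ft m * m) + G m"])
    show "{mbar/2<..<ybar+1} \<subseteq> {0<..}" using mbar_mem by auto
    show "\<And>m. m \<in> {mbar/2<..<ybar+1} \<Longrightarrow> (Ft has_real_derivative ft m) (at m)" by (rule Ftd)
    show "\<And>m. m \<in> {mbar/2<..<ybar+1} \<Longrightarrow>
      ((\<lambda>m. \<mu> mbar / r * F mbar - m * Ft m + (Psi m - Psi mbar)) has_real_derivative - (Ft m + ft m * m) + G m) (at m)"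
    proof -
      fix m assume m: "m \<in> {mbar/2<..<ybar+1}"
      have pm: "mbar/2 < m" using m by simp
      show "((\<lambda>m. \<mu> mbar / r * F mbar - m * Ft m + (Psi m - Psi mbar)) has_real_derivative - (Ft m + ft m * m) + G m) (at m)"
        apply (rule DERIV_cong)
         apply (rule DERIV_add DERIV_diff DERIV_mult DERIV_ident DERIV_const Ftd[OF m] Psi_d[OF pm])+
        apply simp
        done
    qed
    show "continuous_on {mbar/2<..<ybar+1} ft" by (rule ft_c)
    show "continuous_on {mbar/2<..<ybar+1} (\<lambda>m. - (Ft m + ft m * m) + G m)"
      by (intro continuous_intros Ftc Gc ft_c)
    show "{(x, m) \<in> Jset. mbar \<le> m \<and> m \<le> ybar} \<subseteq> {0<..} \<times> {mbar/2<..<ybar+1}"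
      using mbar_mem by (auto simp: Jset_def)
    fix x m assume "(x, m) \<in> {(x, m) \<in> Jset. mbar \<le> m \<and> m \<le> ybar}"
    then have m: "mbar \<le> m" "m \<le> ybar" "m \<le> x" by (auto simp: Jset_def)
    have FF: "F m = Ft m" "F mbar = Ft mbar" using F_Ft m mbar_mem by auto
    show "W x m = x * Ft m + (\<mu> mbar / r * F mbar - m * Ft m + (Psi m - Psi mbar))"
    proof (cases "m = mbar")
      case True
      then show ?thesis using W_at_mbar[of x] m FF by (simp add: algebra_simps)
    next
      case False
      then have "m > mbar" using m by simp
      then show ?thesis using W_up[of m x] lbint_ftc[of m] m FF by (simp add: algebra_simps)
    qed
  qed (auto intro: open_greaterThanLessThan)
  have P2: "C21_on {(x, m) \<in> Jset. ybar \<le> m} W"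
  proof (rule L1[where J="{ybar/2<..}" and P="\<lambda>_. 1" and P'="\<lambda>_. 0"
      and Q="\<lambda>_. \<mu> mbar / r * F mbar - ybar + (Psi ybar - Psi mbar)" and Q'="\<lambda>_. 0"])
    show "{(x, m) \<in> Jset. ybar \<le> m} \<subseteq> {0<..} \<times> {ybar/2<..}"
      using ybar_pos by (auto simp: Jset_def)
    show "{ybar / 2<..} \<subseteq> {0<..}" using ybar_pos by auto
    fix x m assume "(x, m) \<in> {(x, m) \<in> Jset. ybar \<le> m}"
    then have m: "ybar \<le> m" "m \<le> x" by (auto simp: Jset_def)
    have "m > mbar" using m c1 by simp
    then show "W x m = x * 1 + (\<mu> mbar / r * F mbar - ybar + (Psi ybar - Psi mbar))"
      using W_up[of m x] F_one[of m] lbint_split[OF c1 m(1)] lbint_ftc[of ybar] c1 m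
      by (simp add: algebra_simps)
  qed auto
  have cont: "continuous_on Jset (\<lambda>(x, m). W x m)"
  proof -
    have J: "Jset = {(x, m). 0 \<le> m \<and> m \<le> x \<and> 0 \<le> m \<and> m \<le> mbar}
       \<union> ({(x, m). 0 \<le> m \<and> m \<le> x \<and> mbar \<le> m \<and> m \<le> ybar} \<union> {(x, m). 0 \<le> m \<and> m \<le> x \<and> ybar \<le> m})"
      by (auto simp: Jset_def)
    show ?thesis unfolding J
      by (intro continuous_on_closed_Un closed_strip closed_upper closed_Un low_cont
           C21_cont[OF P1, unfolded strip_eq] C21_cont[OF P2, unfolded upper_eq])
  qed
  show ?thesis by (rule class_RI2[OF cont _ c1 P0 P1 P2]) (use mbar_mem in auto)
qed

lemma main_ii: assumes c2: "ybar \<le> mbar" shows "class_R W"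
proof -
  have yx: "ybar < xbar" using c2 mbar_mem by auto
  note btp = bt_props[OF yx]
  have btc: "continuous_on {0<..} bt" by (rule cont_deriv_on, rule btp(1), simp)
  define J where "J = {0<..} \<inter> bt -` S"
  have Jo: "open J" unfolding J_def using btc S_open
    by (metis continuous_on_open_vimage inf_commute open_greaterThan)
  have P0: "C21_on {(x, m) \<in> Jset. 0 < m \<and> m \<le> ybar} W"
  proof (rule L2[where J=J and FF=Ft and FF'=ft and \<beta>=bt and \<beta>'=bt'])
    show "open J" by (rule Jo)
    show "J \<subseteq> {0<..}" unfolding J_def by auto
    show "\<And>m. m \<in> J \<Longrightarrow> (Ft has_real_derivative ft m) (at m)"
      using Ft_d unfolding J_def by auto
    show "\<And>m. m \<in> J \<Longrightarrow> (bt has_real_derivative bt' m) (at m)"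
      using btp(1) unfolding J_def by auto
    show "continuous_on J ft" by (rule ft_c)
    show "continuous_on J bt'" by (rule continuous_on_subset[OF btp(2)]) (auto simp: J_def)
    show "\<And>m. m \<in> J \<Longrightarrow> bt m \<in> S" unfolding J_def by auto
    show "{(x, m) \<in> Jset. 0 < m \<and> m \<le> ybar} \<subseteq> {0<..} \<times> J"
    proof safe
      fix x m assume "(x, m) \<in> Jset" "0 < m" "m \<le> ybar"
      then show "0 < x" "m \<in> J" using btp(3)[of m] bS[of m] yx by (auto simp: Jset_def J_def)
    qed
    fix x m assume "(x, m) \<in> {(x, m) \<in> Jset. 0 < m \<and> m \<le> ybar}"
    then have m: "0 < m" "m \<le> ybar" by (auto simp: Jset_def)
    show "W x m = Ft m * H x (bt m)"
      using W_low[of m x] F_Ft[of m] btp(3)[of m] m c2 by simp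
  qed
  have Pup: "C21_on {(x, m) \<in> Jset. mbar \<le> m} W" by (rule upper_const[OF c2])
  show ?thesis
  proof (cases "ybar = mbar")
    case True
    have cont: "continuous_on Jset (\<lambda>(x, m). W x m)"
    proof -
      have J: "Jset = {(x, m). 0 \<le> m \<and> m \<le> x \<and> 0 \<le> m \<and> m \<le> mbar}
         \<union> {(x, m). 0 \<le> m \<and> m \<le> x \<and> mbar \<le> m}"
        by (auto simp: Jset_def)
      show ?thesis unfolding J
        by (intro continuous_on_closed_Un closed_strip closed_upper low_cont
             C21_cont[OF Pup, unfolded upper_eq])
    qed
    show ?thesis by (rule class_RI1[OF cont ybar_pos P0]) (use Pup True in simp)
  next
    case False
    then have c3: "ybar < mbar" using c2 by simp
    have P1: "C21_on {(x, m) \<in> Jset. ybar \<le> m \<and> m \<le> mbar} W"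
    proof (rule L2[where J="{0<..}" and FF="\<lambda>_. 1" and FF'="\<lambda>_. 0" and \<beta>="\<lambda>_. b ybar" and \<beta>'="\<lambda>_. 0"])
      show "\<And>m. m \<in> {0<..} \<Longrightarrow> b ybar \<in> S" using bS[of ybar] yx ybar_pos by auto
      show "{(x, m) \<in> Jset. ybar \<le> m \<and> m \<le> mbar} \<subseteq> {0<..} \<times> {0<..}"
        using ybar_pos by (auto simp: Jset_def)
      fix x m assume "(x, m) \<in> {(x, m) \<in> Jset. ybar \<le> m \<and> m \<le> mbar}"
      then have m: "ybar \<le> m" "m \<le> mbar" by (auto simp: Jset_def)
      have bm: "b m = b ybar"
      proof (cases "m = ybar")
        case False
        then have "m \<in> {min xbar ybar<..xbar}" using m yx mbar_mem by auto
        then show ?thesis using b_const yx by auto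
      qed simp
      show "W x m = 1 * H x (b ybar)"
        using W_low[of m x] F_one[of m] bm m ybar_pos by simp
    qed (auto intro: continuous_on_const)
    have cont: "continuous_on Jset (\<lambda>(x, m). W x m)"
    proof -
      have J: "Jset = {(x, m). 0 \<le> m \<and> m \<le> x \<and> 0 \<le> m \<and> m \<le> mbar}
         \<union> {(x, m). 0 \<le> m \<and> m \<le> x \<and> mbar \<le> m}"
        by (auto simp: Jset_def)
      show ?thesis unfolding J
        by (intro continuous_on_closed_Un closed_strip closed_upper low_cont
             C21_cont[OF Pup, unfolded upper_eq])
    qed
    show ?thesis by (rule class_RI2[OF cont ybar_pos c3 P0 P1 Pup])
  qed
qed

theorem main: "class_R W"
  using main_i main_ii by (cases "mbar < ybar") auto

end

theorem lemma6:
  fixes \<alpha> :: ereal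
    and \<mu> \<sigma> \<psi> \<phi> f F U U' U'' b :: "real \<Rightarrow> real"
    and r ybar xbar x0 mbar ustar :: real
  (* state space, coefficients, natural boundaries *)
  assumes alpha: "\<alpha> < 0"
    and mu_lip: "\<exists>C. C-lipschitz_on (state_space \<alpha>) \<mu>"
    and sigma_lip: "\<exists>C. C-lipschitz_on (state_space \<alpha>) \<sigma>"
    and sigma_pos: "\<forall>x\<in>state_space \<alpha>. \<sigma> x > 0"
    and nat_left: "natural_left \<alpha> \<mu> \<sigma>"
    and nat_right: "natural_right \<mu> \<sigma>"
    and r_pos: "r > 0"
  (* the density f and distribution function F *)
    and ybar_pos: "ybar > 0"
    and f_nonneg: "\<forall>x\<in>state_space \<alpha>. f x \<ge> 0"
    and f_int: "set_integrable lborel (state_space \<alpha>) f"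
    and f_total: "(LINT y:state_space \<alpha>|lborel. f y) = 1"
    and F_def: "\<forall>x\<in>state_space \<alpha>. F x = (LINT y:{y\<in>state_space \<alpha>. y \<le> x}|lborel. f y)"
    and f_lip: "\<exists>C. C-lipschitz_on {0..ybar} f"
    and f_pos: "\<forall>x\<in>{0..ybar}. f x > 0"
    and f_zero: "\<forall>x\<in>state_space \<alpha>. x \<notin> {0..ybar} \<longrightarrow> f x = 0"
  (* U *)
    and U_nonneg: "\<forall>x\<ge>0. U x \<ge> 0"
  (* Assumption (a) *)
    and mu_C1: "\<forall>x\<in>state_space \<alpha>. \<mu> differentiable (at x)"
    and mu'_lip: "\<exists>C. C-lipschitz_on (state_space \<alpha>) (deriv \<mu>)"
    and sigma_C1: "\<forall>x\<in>state_space \<alpha>. \<sigma> differentiable (at x)"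
    and sigma'_lip: "\<exists>C. C-lipschitz_on (state_space \<alpha>) (deriv \<sigma>)"
    and mu0: "\<mu> 0 > r * U 0"
    and mu'_bound: "\<exists>c<r. \<forall>x\<ge>0. deriv \<mu> x \<le> c"
  (* Assumption (b) *)
    and U_mono: "mono_on {0..} U"
    and U_concave: "concave_on {0..} U"
    and U_d1: "\<forall>x\<ge>0. (U has_real_derivative U' x) (at x within {0..})"
    and U_d2: "\<forall>x\<ge>0. (U' has_real_derivative U'' x) (at x within {0..})"
    and U_C2: "continuous_on {0..} U''"
    and ustar: "ustar \<ge> 0"
    and U'_ge: "\<forall>x\<in>{0..ustar}. U' x \<ge> 1"
    and U'_eq: "\<forall>x\<ge>ustar. U' x = 1"
    and U_gen: "\<forall>x\<in>{0..<ustar}. \<mu> x * U' x + 1/2 * (\<sigma> x)\<^sup>2 * U'' x - r * U x > 0"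
  (* Assumption (c) *)
    and mu_twice: "\<forall>x\<ge>0. deriv \<mu> differentiable (at x)"
    and mu''_nonpos: "\<forall>x\<ge>0. deriv (deriv \<mu>) x \<le> 0"
    and hazard_decr: "antimono_on {0<..ybar} (\<lambda>m. f m / F m)"
  (* the point xbar *)
    and xbar_pos: "xbar > 0"
    and xbar_left: "\<forall>x\<in>{0..<xbar}. \<mu> x - r * U x > 0"
    and xbar_right: "\<forall>x>xbar. \<mu> x - r * U x < 0"
  (* the fundamental solutions psi and phi *)
    and psi_C2: "\<forall>x\<in>state_space \<alpha>. \<psi> differentiable (at x) \<and> deriv \<psi> differentiable (at x)"
    and phi_C2: "\<forall>x\<in>state_space \<alpha>. \<phi> differentiable (at x) \<and> deriv \<phi> differentiable (at x)"
    and psi_ode: "\<forall>x\<in>state_space \<alpha>.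
        1/2 * (\<sigma> x)\<^sup>2 * deriv (deriv \<psi>) x + \<mu> x * deriv \<psi> x - r * \<psi> x = 0"
    and phi_ode: "\<forall>x\<in>state_space \<alpha>.
        1/2 * (\<sigma> x)\<^sup>2 * deriv (deriv \<phi>) x + \<mu> x * deriv \<phi> x - r * \<phi> x = 0"
    and psi_pos: "\<forall>x\<in>state_space \<alpha>. \<psi> x > 0"
    and phi_pos: "\<forall>x\<in>state_space \<alpha>. \<phi> x > 0"
    and psi_incr: "strict_mono_on (state_space \<alpha>) \<psi>"
    and phi_decr: "strict_antimono_on (state_space \<alpha>) \<phi>"
  (* x0 = eta(0) *)
    and x0_mem: "x0 \<in> {0..xbar}"
    and x0_root: "Nfun \<psi> \<phi> \<mu> r U x0 0 = 0"
    and x0_unique: "\<forall>x\<in>{0..xbar}. Nfun \<psi> \<phi> \<mu> r U x 0 = 0 \<longrightarrow> x = x0"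
  (* the boundary b *)
    and b_range: "b ` {0..xbar} \<subseteq> {0..xbar}"
    and b_cont: "continuous_on {0..xbar} b"
    and b0: "b 0 = x0"
    and b_ode: "\<forall>m\<in>{0<..<min xbar ybar}.
        (b has_real_derivative Efun \<psi> \<phi> \<mu> r U f F (b m) m) (at m)"
    and b_C1: "continuous_on {0<..<min xbar ybar} (\<lambda>m. Efun \<psi> \<phi> \<mu> r U f F (b m) m)"
    and b_const: "\<forall>m\<in>{min xbar ybar<..xbar}. b m = b (min xbar ybar)"
  (* mbar = min {m. b m = m} *)
    and mbar_mem: "mbar \<in> {0<..<xbar}"
    and mbar_fix: "b mbar = mbar"
    and mbar_min: "\<forall>m\<in>{0..<mbar}. b m \<noteq> m"
  shows "class_R (Wfun \<psi> \<phi> \<mu> r U f F b mbar)"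
  proof -
  have Uc: "continuous_on {0..} U"
    unfolding continuous_on_eq_continuous_within
    using U_d1 by (auto intro: DERIV_continuous)
  interpret LS \<alpha> \<mu> \<sigma> \<psi> \<phi> f F U b r ybar xbar mbar
    by (rule LS.intro) (fact assms Uc)+
  show ?thesis by (rule main)
qed


end
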